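(* Let $(M,F)$ be a conic pseudo-Riemannian surface and $\overline F=e^\phi F$ an anisotropic conformal change such that $\overline F$ is Berwald. Then the Berwald connection of $\overline F$ coincides with the Levi-Civita (Berwald) connection of $F$, i.e. $\overline G^i_{jk}=G^i_{jk}$ ($\overline F$ is Riemann metrizable by $F$), if and only if $\phi_{,1}=\phi_{,2}=0$.
   Context: Throughout, $M$ is a smooth $2$-dimensional manifold, $TM_0$ its slit tangent bundle with induced local coordinates $(x^i,y^i)$, $\partial_i=\partial/\partial x^i$, $\dot\partial_i=\partial/\partial y^i$. A function is called $h(r)$ if it is positively homogeneous of degree $r$ in $y$. A conic pseudo-Finsler surface $(M,F)$ consists of a conic subbundle $\mathcal A\subset TM_0$ (an open set invariant under $y\mapsto\lambda y$, $\lambda>0$, projecting onto $M$) and a smooth $h(1)$ function $F:\mathcal A\to\mathbb R$ such that $g_{ij}=\frac12\dot\partial_i\dot\partial_jF^2$ is nondegenerate. Put $\ell_i=\dot\partial_iF$, $\ell^i=y^i/F$. Modified Berwald frame: $\varepsilon\in\{1,-1\}$ and a covector $m_i$ satisfy $g_{ij}=\ell_i\ell_j+\varepsilon m_im_j$, $m^i=g^{ij}m_j$. The geodesic spray of $F$ is $S=y^i\partial_i-2G^i\dot\partial_i$; $G^i_j=\dot\partial_jG^i$, $G^i_{jk}=\dot\partial_kG^i_j$ (Berwald connection), $\delta_i=\partial_i-G^j_i\dot\partial_j$. For a smooth function $f$: $f_{,1}=\ell^i\delta_if$, $f_{,2}=\varepsilon m^i\delta_if$. $F$ is (conic pseudo-)Riemannian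 if $F^2$ is quadratic in $y$. Anisotropic conformal change: $\phi$ is a smooth $h(0)$ function on $\mathcal A$ with $F^2(\dot\partial_i\dot\partial_j\phi+\dot\partial_i\phi\,\dot\partial_j\phi)m^im^j+\varepsilon\ne0$, and $\overline F=e^{\phi}F$, with spray coefficients $\overline G^i$ and Berwald connection $\overline G^i_{jk}=\dot\partial_j\dot\partial_k\overline G^i$. $\overline F$ is Berwald iff the $\overline G^i$ are quadratic in $y$. *)

theory Defs
  imports "HOL-Analysis.Analysis"
begin

text \<open>Local-coordinate rendering. A point of TM is a pair (x,y) of real^2 vectors;
  indices range over the 2-element type 2.\<close>

type_synonym pt = "(real^2) \<times> (real^2)"

fun iter_pd :: "pt list \<Rightarrow> (pt \<Rightarrow> real) \<Rightarrow> pt \<Rightarrow> real" where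
  "iter_pd [] f = f"
| "iter_pd (v # vs) f = (\<lambda>p. frechet_derivative (iter_pd vs f) (at p) v)"

definition smooth_on :: "pt set \<Rightarrow> (pt \<Rightarrow> real) \<Rightarrow> bool" where
  "smooth_on A f \<longleftrightarrow> (\<forall>vs. \<forall>p\<in>A. iter_pd vs f differentiable (at p))"

text \<open>Partial derivatives: dX i = \<partial>_i (w.r.t. x^i), dY i = dot-\<partial>_i (w.r.t. y^i).\<close>
definition dX :: "2 \<Rightarrow> (pt \<Rightarrow> real) \<Rightarrow> pt \<Rightarrow> real" where
  "dX i f p = frechet_derivative f (at p) (axis i 1, 0)"

definition dY :: "2 \<Rightarrow> (pt \<Rightarrow> real) \<Rightarrow> pt \<Rightarrow> real" where
  "dY i f p = frechet_derivative f (at p) (0, axis i 1)"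

text \<open>Conic subbundle of TM_0 over the chart domain M = fst ` A.\<close>
definition conic_subbundle :: "pt set \<Rightarrow> bool" where
  "conic_subbundle A \<longleftrightarrow> open A \<and> (\<forall>(x,y)\<in>A. y \<noteq> 0)
     \<and> (\<forall>(x,y)\<in>A. \<forall>t::real. t > 0 \<longrightarrow> (x, t *\<^sub>R y) \<in> A)"

definition homog_on :: "pt set \<Rightarrow> nat \<Rightarrow> (pt \<Rightarrow> real) \<Rightarrow> bool" where
  "homog_on A r f \<longleftrightarrow> (\<forall>(x,y)\<in>A. \<forall>t::real. t > 0 \<longrightarrow> f (x, t *\<^sub>R y) = t ^ r * f (x, y))"

definition gmat :: "(pt \<Rightarrow> real) \<Rightarrow> pt \<Rightarrow> real^2^2" where
  "gmat F p = (\<chi> i j. dY i (dY j (\<lambda>q. (F q)^2)) p / 2)"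

definition ginv :: "(pt \<Rightarrow> real) \<Rightarrow> pt \<Rightarrow> real^2^2" where
  "ginv F p = matrix_inv (gmat F p)"

definition pseudo_finsler :: "pt set \<Rightarrow> (pt \<Rightarrow> real) \<Rightarrow> bool" where
  "pseudo_finsler A F \<longleftrightarrow> conic_subbundle A \<and> smooth_on A F \<and> homog_on A 1 F
     \<and> (\<forall>p\<in>A. F p \<noteq> 0) \<and> (\<forall>p\<in>A. det (gmat F p) \<noteq> 0)"

definition pseudo_riemannian :: "pt set \<Rightarrow> (pt \<Rightarrow> real) \<Rightarrow> bool" where
  "pseudo_riemannian A F \<longleftrightarrow> (\<exists>a :: real^2 \<Rightarrow> real^2^2. \<forall>(x,y)\<in>A.
      (F (x,y))^2 = (\<Sum>i\<in>UNIV. \<Sum>j\<in>UNIV. a x $ i $ j * y $ i * y $ j))"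

definition spray :: "(pt \<Rightarrow> real) \<Rightarrow> 2 \<Rightarrow> pt \<Rightarrow> real" where
  "spray F i p = (1/4) * (\<Sum>l\<in>UNIV. ginv F p $ i $ l *
      ((\<Sum>k\<in>UNIV. snd p $ k * dX k (dY l (\<lambda>q. (F q)^2)) p) - dX l (\<lambda>q. (F q)^2) p))"

definition nonlin_conn :: "(pt \<Rightarrow> real) \<Rightarrow> 2 \<Rightarrow> 2 \<Rightarrow> pt \<Rightarrow> real" where
  "nonlin_conn F i j = dY j (spray F i)"

definition berwald_conn :: "(pt \<Rightarrow> real) \<Rightarrow> 2 \<Rightarrow> 2 \<Rightarrow> 2 \<Rightarrow> pt \<Rightarrow> real" where
  "berwald_conn F i j k = dY k (dY j (spray F i))"

definition is_berwald :: "pt set \<Rightarrow> (pt \<Rightarrow> real) \<Rightarrow> bool" where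
  "is_berwald A F \<longleftrightarrow> (\<exists>c :: 2 \<Rightarrow> real^2 \<Rightarrow> real^2^2. \<forall>(x,y)\<in>A. \<forall>i.
      spray F i (x,y) = (\<Sum>j\<in>UNIV. \<Sum>k\<in>UNIV. c i x $ j $ k * y $ j * y $ k))"

definition delta :: "(pt \<Rightarrow> real) \<Rightarrow> 2 \<Rightarrow> (pt \<Rightarrow> real) \<Rightarrow> pt \<Rightarrow> real" where
  "delta F i f p = dX i f p - (\<Sum>j\<in>UNIV. nonlin_conn F j i p * dY j f p)"

definition berwald_frame :: "pt set \<Rightarrow> (pt \<Rightarrow> real) \<Rightarrow> (pt \<Rightarrow> real) \<Rightarrow> (pt \<Rightarrow> real^2) \<Rightarrow> bool" where
  "berwald_frame A F eps m \<longleftrightarrow> (\<forall>p\<in>A. (eps p = 1 \<or> eps p = -1) \<and>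
     (\<forall>i j. gmat F p $ i $ j = dY i F p * dY j F p + eps p * m p $ i * m p $ j))"

definition m_up :: "(pt \<Rightarrow> real) \<Rightarrow> (pt \<Rightarrow> real^2) \<Rightarrow> pt \<Rightarrow> real^2" where
  "m_up F m p = ginv F p *v m p"

definition ell_up :: "(pt \<Rightarrow> real) \<Rightarrow> pt \<Rightarrow> real^2" where
  "ell_up F p = (1 / F p) *\<^sub>R snd p"

definition comma1 :: "(pt \<Rightarrow> real) \<Rightarrow> (pt \<Rightarrow> real) \<Rightarrow> pt \<Rightarrow> real" where
  "comma1 F f p = (\<Sum>i\<in>UNIV. ell_up F p $ i * delta F i f p)"

definition comma2 :: "(pt \<Rightarrow> real) \<Rightarrow> (pt \<Rightarrow> real) \<Rightarrow> (pt \<Rightarrow> real^2) \<Rightarrow> (pt \<Rightarrow> real) \<Rightarrow> pt \<Rightarrow> real" where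
  "comma2 F eps m f p = eps p * (\<Sum>i\<in>UNIV. m_up F m p $ i * delta F i f p)"

definition aniso_conformal :: "pt set \<Rightarrow> (pt \<Rightarrow> real) \<Rightarrow> (pt \<Rightarrow> real) \<Rightarrow> (pt \<Rightarrow> real^2) \<Rightarrow> (pt \<Rightarrow> real) \<Rightarrow> bool" where
  "aniso_conformal A F eps m phi \<longleftrightarrow> smooth_on A phi \<and> homog_on A 0 phi \<and>
     (\<forall>p\<in>A. (F p)^2 * (\<Sum>i\<in>UNIV. \<Sum>j\<in>UNIV.
        (dY i (dY j phi) p + dY i phi p * dY j phi p) * m_up F m p $ i * m_up F m p $ j) + eps p \<noteq> 0)"

end

theory Submission
  imports Defs
begin


definition D :: "pt \<Rightarrow> (pt \<Rightarrow> real) \<Rightarrow> pt \<Rightarrow> real" where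
  "D v f p = frechet_derivative f (at p) v"

lemma dX_D: "dX i f = D (axis i 1, 0) f" by (simp add: dX_def D_def fun_eq_iff)
lemma dY_D: "dY i f = D (0, axis i 1) f" by (simp add: dY_def D_def fun_eq_iff)

lemma fd_local:
  assumes "open A" "p \<in> A" "\<And>q. q \<in> A \<Longrightarrow> f q = g q"
  shows "frechet_derivative f (at p) = frechet_derivative g (at p)"
proof -
  have "(f has_derivative f') (at p) \<longleftrightarrow> (g has_derivative f') (at p)" for f'
    using has_derivative_transform_within_open[of f f' p UNIV A g]
      has_derivative_transform_within_open[of g f' p UNIV A f] assms by metis
  then show ?thesis unfolding frechet_derivative_def by simp
qed

lemma D_local: "open A \<Longrightarrow> p \<in> A \<Longrightarrow> (\<And>q. q \<in> A \<Longrightarrow> f q = g q) \<Longrightarrow> D v f p = D v g p"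
  unfolding D_def using fd_local by metis

lemma diff_local: "open A \<Longrightarrow> p \<in> A \<Longrightarrow> (\<And>q. q \<in> A \<Longrightarrow> f q = g q) \<Longrightarrow> f differentiable (at p) \<Longrightarrow> g differentiable (at p)"
  unfolding differentiable_def using has_derivative_transform_within_open by metis

lemma D_hasd: "(f has_derivative f') (at p) \<Longrightarrow> D v f p = f' v"
  unfolding D_def using frechet_derivative_at by metis

lemma D_works: "f differentiable (at p) \<Longrightarrow> (f has_derivative (\<lambda>v. D v f p)) (at p)"
  unfolding D_def using frechet_derivative_works by (metis eta_contract_eq)

lemma D_linear: "f differentiable (at p) \<Longrightarrow> linear (\<lambda>v. D v f p)"
  using D_works has_derivative_linear by blast

lemma D_add_dir: "f differentiable (at p) \<Longrightarrow> D (u + w) f p = D u f p + D w f p"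
  using D_linear linear_add by blast

lemma D_scale_dir: "f differentiable (at p) \<Longrightarrow> D (c *\<^sub>R u) f p = c * D u f p"
  using D_linear[of f p] linear_scale by fastforce

lemma D_sum_dir: "f differentiable (at p) \<Longrightarrow> D (\<Sum>i\<in>S. u i) f p = (\<Sum>i\<in>S. D (u i) f p)"
  using D_linear[of f p] linear_sum by fastforce

lemma vec2_decomp: "(y::real^2) = (\<Sum>i\<in>UNIV. y $ i *\<^sub>R axis i 1)"
  by (simp add: vec_eq_iff sum_2 axis_def) (metis exhaust_2 one_neq_zero num1_eq1 zero_neq_one)

lemma D_dirY: "f differentiable (at p) \<Longrightarrow> D (0, y) f p = (\<Sum>i\<in>UNIV. y $ i * dY i f p)"
proof -
  assume f: "f differentiable (at p)"
  have e: "(0::real^2, y) = (\<Sum>i\<in>UNIV. y $ i *\<^sub>R (0, axis i 1))"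
    by (subst vec2_decomp[of y]) (simp add: sum_prod)
  have "D (0, y) f p = D (\<Sum>i\<in>UNIV. y $ i *\<^sub>R (0::real^2, axis i 1)) f p" by (subst e, rule refl)
  also have "\<dots> = (\<Sum>i\<in>UNIV. y $ i * dY i f p)"
    by (simp only: D_sum_dir[OF f] D_scale_dir[OF f] dY_D)
  finally show ?thesis .
qed

lemma D_dirX: "f differentiable (at p) \<Longrightarrow> D (x, 0) f p = (\<Sum>i\<in>UNIV. x $ i * dX i f p)"
proof -
  assume f: "f differentiable (at p)"
  have e: "(x, 0::real^2) = (\<Sum>i\<in>UNIV. x $ i *\<^sub>R (axis i 1, 0::real^2))"
    by (subst vec2_decomp[of x]) (simp add: sum_prod)
  have "D (x, 0) f p = D (\<Sum>i\<in>UNIV. x $ i *\<^sub>R (axis i 1, 0::real^2)) f p" by (subst e, rule refl)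
  also have "\<dots> = (\<Sum>i\<in>UNIV. x $ i * dX i f p)"
    by (simp only: D_sum_dir[OF f] D_scale_dir[OF f] dX_D)
  finally show ?thesis .
qed

lemma D_const[simp]: "D v (\<lambda>q. c) p = 0"
  by (simp add: D_def)

lemma D_add: "f differentiable (at p) \<Longrightarrow> g differentiable (at p) \<Longrightarrow>
   D v (\<lambda>q. f q + g q) p = D v f p + D v g p"
  using D_hasd[OF has_derivative_add[OF D_works D_works]] by blast

lemma D_diff: "f differentiable (at p) \<Longrightarrow> g differentiable (at p) \<Longrightarrow>
   D v (\<lambda>q. f q - g q) p = D v f p - D v g p"
  using D_hasd[OF has_derivative_diff[OF D_works D_works]] by blast

lemma D_minus: "f differentiable (at p) \<Longrightarrow> D v (\<lambda>q. - f q) p = - D v f p"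
  using D_hasd[OF has_derivative_minus[OF D_works]] by blast

lemma D_mult: "f differentiable (at p) \<Longrightarrow> g differentiable (at p) \<Longrightarrow>
   D v (\<lambda>q. f q * g q) p = D v f p * g p + f p * D v g p"
  using D_hasd[OF has_derivative_mult[OF D_works D_works]] by (simp add: algebra_simps)

lemma D_cmult: "f differentiable (at p) \<Longrightarrow> D v (\<lambda>q. c * f q) p = c * D v f p"
  using D_mult[of "\<lambda>q. c" p f v] by simp

lemma D_sum: "finite S \<Longrightarrow> (\<And>i. i \<in> S \<Longrightarrow> f i differentiable (at p)) \<Longrightarrow>
   D v (\<lambda>q. \<Sum>i\<in>S. f i q) p = (\<Sum>i\<in>S. D v (f i) p)"
proof (induction S rule: finite_induct)
  case empty then show ?case by simp
next
  case (insert x F)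
  have "D v (\<lambda>q. \<Sum>i\<in>insert x F. f i q) p = D v (\<lambda>q. f x q + (\<Sum>i\<in>F. f i q)) p"
    using insert by simp
  also have "\<dots> = D v (f x) p + D v (\<lambda>q. \<Sum>i\<in>F. f i q) p"
    by (rule D_add) (use insert in \<open>auto intro!: differentiable_sum\<close>)
  finally show ?case using insert by simp
qed

lemma D_exp: "f differentiable (at p) \<Longrightarrow> D v (\<lambda>q. exp (f q)) p = exp (f p) * D v f p"
proof -
  assume f: "f differentiable (at p)"
  have "(exp has_derivative (*) (exp (f p))) (at (f p))"
    using DERIV_exp[of "f p", unfolded has_field_derivative_def] .
  from D_hasd[OF has_derivative_compose[OF D_works[OF f] this]] show ?thesis .
qed

lemma diff_exp: "(f::pt\<Rightarrow>real) differentiable (at p) \<Longrightarrow> (\<lambda>q. exp (f q)) differentiable (at p)"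
proof -
  assume f: "f differentiable (at p)"
  have "(exp has_derivative (*) (exp (f p))) (at (f p))"
    using DERIV_exp[of "f p", unfolded has_field_derivative_def] .
  from has_derivative_compose[OF D_works[OF f] this] show ?thesis
    unfolding differentiable_def by blast
qed

lemma D_inverse: "f differentiable (at p) \<Longrightarrow> f p \<noteq> 0 \<Longrightarrow>
  D v (\<lambda>q. inverse (f q)) p = - D v f p / (f p)^2"
proof -
  assume f: "f differentiable (at p)" and n: "f p \<noteq> 0"
  from D_hasd[OF Deriv.has_derivative_inverse[OF n D_works[OF f]]]
  have "D v (\<lambda>q. inverse (f q)) p = - (inverse (f p) * D v f p * inverse (f p))" .
  also have "\<dots> = - D v f p / (f p)^2" using n by (simp add: field_simps power2_eq_square)
  finally show ?thesis .
qed

lemma bl_fst: "bounded_linear (\<lambda>q::pt. fst q $ k)"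
  using bounded_linear_compose[OF bounded_linear_vec_nth[of k] bounded_linear_fst[where 'a="real^2" and 'b="real^2"]] by simp
lemma bl_snd: "bounded_linear (\<lambda>q::pt. snd q $ k)"
  using bounded_linear_compose[OF bounded_linear_vec_nth[of k] bounded_linear_snd[where 'a="real^2" and 'b="real^2"]] by simp

lemma D_fst: "D v (\<lambda>q. fst q $ k) p = fst v $ k"
  using D_hasd[OF bounded_linear_imp_has_derivative[OF bl_fst]] by simp
lemma D_snd: "D v (\<lambda>q. snd q $ k) p = snd v $ k"
  using D_hasd[OF bounded_linear_imp_has_derivative[OF bl_snd]] by simp
lemma diff_fst: "(\<lambda>q::pt. fst q $ k) differentiable (at p)"
  using bounded_linear_imp_has_derivative[OF bl_fst] differentiable_def by blast
lemma diff_snd: "(\<lambda>q::pt. snd q $ k) differentiable (at p)"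
  using bounded_linear_imp_has_derivative[OF bl_snd] differentiable_def by blast

definition sm :: "pt set \<Rightarrow> nat \<Rightarrow> (pt \<Rightarrow> real) \<Rightarrow> bool" where
  "sm A n f \<longleftrightarrow> (\<forall>vs. length vs \<le> n \<longrightarrow> (\<forall>p\<in>A. iter_pd vs f differentiable (at p)))"

lemma iter_pd_snoc: "iter_pd (vs @ [v]) f = iter_pd vs (D v f)"
proof (induction vs)
  case Nil then show ?case by (simp add: D_def fun_eq_iff)
next
  case (Cons a vs) then show ?case by simp
qed

lemma sm_0: "sm A 0 f \<longleftrightarrow> (\<forall>p\<in>A. f differentiable (at p))"
  by (simp add: sm_def)

lemma sm_Suc: "sm A (Suc n) f \<longleftrightarrow> (\<forall>p\<in>A. f differentiable (at p)) \<and> (\<forall>v. sm A n (D v f))"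
proof
  assume h: "sm A (Suc n) f"
  show "(\<forall>p\<in>A. f differentiable (at p)) \<and> (\<forall>v. sm A n (D v f))"
  proof (intro conjI allI)
    show "\<forall>p\<in>A. f differentiable (at p)" using h[unfolded sm_def, rule_format, of "[]"] by simp
    fix v show "sm A n (D v f)" unfolding sm_def
    proof (intro allI impI ballI)
      fix vs :: "pt list" and p assume "length vs \<le> n" "p \<in> A"
      then show "iter_pd vs (D v f) differentiable (at p)"
        using h[unfolded sm_def, rule_format, of "vs @ [v]" p] by (simp add: iter_pd_snoc)
    qed
  qed
next
  assume h: "(\<forall>p\<in>A. f differentiable (at p)) \<and> (\<forall>v. sm A n (D v f))"
  show "sm A (Suc n) f" unfolding sm_def
  proof (intro allI impI ballI)
    fix vs :: "pt list" and p assume l: "length vs \<le> Suc n" and p: "p \<in> A"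
    show "iter_pd vs f differentiable (at p)"
    proof (cases vs rule: rev_exhaust)
      case Nil then show ?thesis using h p by simp
    next
      case (snoc us v)
      then have "length us \<le> n" using l by simp
      then have "iter_pd us (D v f) differentiable (at p)" using h p unfolding sm_def by blast
      then show ?thesis using snoc by (simp add: iter_pd_snoc)
    qed
  qed
qed

lemma smooth_sm: "smooth_on A f \<longleftrightarrow> (\<forall>n. sm A n f)"
  unfolding smooth_on_def sm_def by (metis order_refl)

lemma sm_mono: "m \<le> n \<Longrightarrow> sm A n f \<Longrightarrow> sm A m f"
  unfolding sm_def by auto

lemma sm_Suc_D: "sm A (Suc n) f \<Longrightarrow> sm A n (D v f)"
  using sm_Suc by blast
lemma sm_Suc_mono: "sm A (Suc n) f \<Longrightarrow> sm A n f"
  using sm_mono[of n "Suc n"] by simp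
lemma sm_diffble: "sm A n f \<Longrightarrow> p \<in> A \<Longrightarrow> f differentiable (at p)"
  using sm_mono[of 0 n A f] sm_0 by blast

lemma iter_local: "open A \<Longrightarrow> (\<And>q. q \<in> A \<Longrightarrow> f q = g q) \<Longrightarrow> q \<in> A \<Longrightarrow> iter_pd vs f q = iter_pd vs g q"
proof (induction vs arbitrary: q)
  case Nil then show ?case by simp
next
  case (Cons v vs)
  have "frechet_derivative (iter_pd vs f) (at q) = frechet_derivative (iter_pd vs g) (at q)"
    by (rule fd_local[OF Cons.prems(1,3)]) (use Cons in auto)
  then show ?case by simp
qed

lemma sm_cong: assumes "open A" "sm A n f" "\<And>q. q \<in> A \<Longrightarrow> f q = g q" shows "sm A n g"
  unfolding sm_def
proof (intro allI impI ballI)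
  fix vs :: "pt list" and p assume "length vs \<le> n" "p \<in> A"
  show "iter_pd vs g differentiable (at p)"
  proof (rule diff_local[OF assms(1) \<open>p\<in>A\<close>, of "iter_pd vs f"])
    show "\<And>q. q \<in> A \<Longrightarrow> iter_pd vs f q = iter_pd vs g q"
      using iter_local[OF assms(1), of f g] assms(3) by blast
    show "iter_pd vs f differentiable at p" using assms(2) \<open>length vs \<le> n\<close> \<open>p\<in>A\<close> unfolding sm_def by blast
  qed
qed

lemma D_const_fun: "D v (\<lambda>q. c) = (\<lambda>p. 0)" by (simp add: fun_eq_iff)

lemma sm_const: "sm A n (\<lambda>q. c)"
proof (induction n arbitrary: c)
  case 0 then show ?case by (simp add: sm_0)
next
  case (Suc n) then show ?case by (simp add: sm_Suc D_const_fun)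
qed

lemma sm_fst: "sm A n (\<lambda>q. fst q $ k)"
proof (cases n)
  case 0 then show ?thesis by (simp add: sm_0 diff_fst)
next
  case (Suc n)
  have "D v (\<lambda>q. fst q $ k) = (\<lambda>p. fst v $ k)" for v by (simp add: fun_eq_iff D_fst)
  then show ?thesis using Suc by (simp add: sm_Suc diff_fst sm_const)
qed

lemma sm_snd: "sm A n (\<lambda>q. snd q $ k)"
proof (cases n)
  case 0 then show ?thesis by (simp add: sm_0 diff_snd)
next
  case (Suc n)
  have "D v (\<lambda>q. snd q $ k) = (\<lambda>p. snd v $ k)" for v by (simp add: fun_eq_iff D_snd)
  then show ?thesis using Suc by (simp add: sm_Suc diff_snd sm_const)
qed

lemma sm_add: "open A \<Longrightarrow> sm A n f \<Longrightarrow> sm A n g \<Longrightarrow> sm A n (\<lambda>q. f q + g q)"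
proof (induction n arbitrary: f g)
  case 0 then show ?case by (simp add: sm_0)
next
  case (Suc n)
  show ?case unfolding sm_Suc
  proof (intro conjI allI ballI)
    fix p assume p: "p \<in> A" show "(\<lambda>q. f q + g q) differentiable (at p)"
      using sm_diffble[OF Suc.prems(2) p] sm_diffble[OF Suc.prems(3) p] by (rule differentiable_add)
  next
    fix v
    have "sm A n (\<lambda>q. D v f q + D v g q)"
      using Suc.IH[OF Suc.prems(1) sm_Suc_D[OF Suc.prems(2)] sm_Suc_D[OF Suc.prems(3)]] .
    then show "sm A n (D v (\<lambda>q. f q + g q))"
    proof (rule sm_cong[OF Suc.prems(1)])
      fix q assume q: "q \<in> A"
      show "D v f q + D v g q = D v (\<lambda>q. f q + g q) q"
        using D_add[OF sm_diffble[OF Suc.prems(2) q] sm_diffble[OF Suc.prems(3) q]] by simp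
    qed
  qed
qed

lemma sm_minus: "open A \<Longrightarrow> sm A n f \<Longrightarrow> sm A n (\<lambda>q. - f q)"
proof (induction n arbitrary: f)
  case 0 then show ?case by (simp add: sm_0)
next
  case (Suc n)
  show ?case unfolding sm_Suc
  proof (intro conjI allI ballI)
    fix p assume p: "p \<in> A" show "(\<lambda>q. - f q) differentiable (at p)"
      using sm_diffble[OF Suc.prems(2) p] by (rule differentiable_minus)
  next
    fix v
    have "sm A n (\<lambda>q. - D v f q)" using Suc.IH[OF Suc.prems(1) sm_Suc_D[OF Suc.prems(2)]] .
    then show "sm A n (D v (\<lambda>q. - f q))"
    proof (rule sm_cong[OF Suc.prems(1)])
      fix q assume q: "q \<in> A"
      show "- D v f q = D v (\<lambda>q. - f q) q"
        using D_minus[OF sm_diffble[OF Suc.prems(2) q]] by simp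
    qed
  qed
qed

lemma sm_diff: "open A \<Longrightarrow> sm A n f \<Longrightarrow> sm A n g \<Longrightarrow> sm A n (\<lambda>q. f q - g q)"
  using sm_add[of A n f "\<lambda>q. - g q"] sm_minus[of A n g] by simp

lemma sm_mult: "open A \<Longrightarrow> sm A n f \<Longrightarrow> sm A n g \<Longrightarrow> sm A n (\<lambda>q. f q * g q)"
proof (induction n arbitrary: f g)
  case 0 then show ?case by (simp add: sm_0)
next
  case (Suc n)
  show ?case unfolding sm_Suc
  proof (intro conjI allI ballI)
    fix p assume p: "p \<in> A" show "(\<lambda>q. f q * g q) differentiable (at p)"
      using sm_diffble[OF Suc.prems(2) p] sm_diffble[OF Suc.prems(3) p] by (rule differentiable_mult)
  next
    fix v
    have "sm A n (\<lambda>q. D v f q * g q)"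
      using Suc.IH[OF Suc.prems(1) sm_Suc_D[OF Suc.prems(2)] sm_Suc_mono[OF Suc.prems(3)]] .
    moreover have "sm A n (\<lambda>q. f q * D v g q)"
      using Suc.IH[OF Suc.prems(1) sm_Suc_mono[OF Suc.prems(2)] sm_Suc_D[OF Suc.prems(3)]] .
    ultimately have "sm A n (\<lambda>q. D v f q * g q + f q * D v g q)" by (rule sm_add[OF Suc.prems(1)])
    then show "sm A n (D v (\<lambda>q. f q * g q))"
    proof (rule sm_cong[OF Suc.prems(1)])
      fix q assume q: "q \<in> A"
      show "D v f q * g q + f q * D v g q = D v (\<lambda>q. f q * g q) q"
        using D_mult[OF sm_diffble[OF Suc.prems(2) q] sm_diffble[OF Suc.prems(3) q]] by simp
    qed
  qed
qed

lemma sm_exp: "open A \<Longrightarrow> sm A n f \<Longrightarrow> sm A n (\<lambda>q. exp (f q))"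
proof (induction n arbitrary: f)
  case 0 then show ?case using diff_exp by (simp add: sm_0)
next
  case (Suc n)
  show ?case unfolding sm_Suc
  proof (intro conjI allI ballI)
    fix p assume p: "p \<in> A" show "(\<lambda>q. exp (f q)) differentiable (at p)"
      using sm_diffble[OF Suc.prems(2) p] by (rule diff_exp)
  next
    fix v
    have "sm A n (\<lambda>q. exp (f q) * D v f q)"
      using sm_mult[OF Suc.prems(1) Suc.IH[OF Suc.prems(1) sm_Suc_mono[OF Suc.prems(2)]] sm_Suc_D[OF Suc.prems(2)]] .
    then show "sm A n (D v (\<lambda>q. exp (f q)))"
    proof (rule sm_cong[OF Suc.prems(1)])
      fix q assume q: "q \<in> A"
      show "exp (f q) * D v f q = D v (\<lambda>q. exp (f q)) q"
        using D_exp[OF sm_diffble[OF Suc.prems(2) q]] by simp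
    qed
  qed
qed

lemma sm_inverse: "open A \<Longrightarrow> sm A n f \<Longrightarrow> (\<And>q. q \<in> A \<Longrightarrow> f q \<noteq> 0) \<Longrightarrow> sm A n (\<lambda>q. inverse (f q))"
proof (induction n arbitrary: f)
  case 0 then show ?case by (simp add: sm_0)
next
  case (Suc n)
  show ?case unfolding sm_Suc
  proof (intro conjI allI ballI)
    fix p assume p: "p \<in> A" show "(\<lambda>q. inverse (f q)) differentiable (at p)"
      using sm_diffble[OF Suc.prems(2) p] Suc.prems(3)[OF p] by (rule differentiable_inverse)
  next
    fix v
    have i: "sm A n (\<lambda>q. inverse (f q))"
      using Suc.IH[OF Suc.prems(1) sm_Suc_mono[OF Suc.prems(2)] Suc.prems(3)] .
    have "sm A n (\<lambda>q. inverse (f q) * inverse (f q))" by (rule sm_mult[OF Suc.prems(1) i i])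
    then have "sm A n (\<lambda>q. D v f q * (inverse (f q) * inverse (f q)))"
      by (rule sm_mult[OF Suc.prems(1) sm_Suc_D[OF Suc.prems(2)]])
    then have "sm A n (\<lambda>q. - (D v f q * (inverse (f q) * inverse (f q))))"
      by (rule sm_minus[OF Suc.prems(1)])
    then show "sm A n (D v (\<lambda>q. inverse (f q)))"
    proof (rule sm_cong[OF Suc.prems(1)])
      fix q assume q: "q \<in> A"
      have "D v (\<lambda>q. inverse (f q)) q = - D v f q / (f q)^2"
        using D_inverse[OF sm_diffble[OF Suc.prems(2) q] Suc.prems(3)[OF q]] .
      then show "- (D v f q * (inverse (f q) * inverse (f q))) = D v (\<lambda>q. inverse (f q)) q"
        by (simp add: field_simps power2_eq_square)
    qed
  qed
qed

lemma sm_sum: assumes A: "open A" and "finite S" and "\<And>i. i \<in> S \<Longrightarrow> sm A n (f i)"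
  shows "sm A n (\<lambda>q. \<Sum>i\<in>S. f i q)"
  using assms(2,3)
proof (induction S rule: finite_induct)
  case empty then show ?case by (simp add: sm_const)
next
  case (insert x F)
  have "sm A n (\<lambda>q. f x q + (\<Sum>i\<in>F. f i q))"
    using sm_add[OF A insert(4)[of x] insert(3)] insert(4) by simp
  then show ?case using insert(1,2) by simp
qed

lemma smooth_D: "smooth_on A f \<Longrightarrow> smooth_on A (D v f)"
  unfolding smooth_sm using sm_Suc_D by blast
lemma smooth_dX: "smooth_on A f \<Longrightarrow> smooth_on A (dX i f)"
  unfolding dX_D by (rule smooth_D)
lemma smooth_dY: "smooth_on A f \<Longrightarrow> smooth_on A (dY i f)"
  unfolding dY_D by (rule smooth_D)
lemma smooth_diffble: "smooth_on A f \<Longrightarrow> p \<in> A \<Longrightarrow> f differentiable (at p)"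
  unfolding smooth_sm using sm_diffble by blast
lemma smooth_const: "smooth_on A (\<lambda>q. c)" unfolding smooth_sm using sm_const by blast
lemma smooth_fst: "smooth_on A (\<lambda>q. fst q $ k)" unfolding smooth_sm using sm_fst by blast
lemma smooth_snd: "smooth_on A (\<lambda>q. snd q $ k)" unfolding smooth_sm using sm_snd by blast
lemma smooth_add: "open A \<Longrightarrow> smooth_on A f \<Longrightarrow> smooth_on A g \<Longrightarrow> smooth_on A (\<lambda>q. f q + g q)"
  unfolding smooth_sm using sm_add by blast
lemma smooth_diff: "open A \<Longrightarrow> smooth_on A f \<Longrightarrow> smooth_on A g \<Longrightarrow> smooth_on A (\<lambda>q. f q - g q)"
  unfolding smooth_sm using sm_diff by blast
lemma smooth_minus: "open A \<Longrightarrow> smooth_on A f \<Longrightarrow> smooth_on A (\<lambda>q. - f q)"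
  unfolding smooth_sm using sm_minus by blast
lemma smooth_mult: "open A \<Longrightarrow> smooth_on A f \<Longrightarrow> smooth_on A g \<Longrightarrow> smooth_on A (\<lambda>q. f q * g q)"
  unfolding smooth_sm using sm_mult by blast
lemma smooth_exp: "open A \<Longrightarrow> smooth_on A f \<Longrightarrow> smooth_on A (\<lambda>q. exp (f q))"
  unfolding smooth_sm using sm_exp by blast
lemma smooth_inverse: "open A \<Longrightarrow> smooth_on A f \<Longrightarrow> (\<And>q. q \<in> A \<Longrightarrow> f q \<noteq> 0) \<Longrightarrow> smooth_on A (\<lambda>q. inverse (f q))"
  unfolding smooth_sm using sm_inverse by blast
lemma smooth_sum: "open A \<Longrightarrow> finite S \<Longrightarrow> (\<And>i. i \<in> S \<Longrightarrow> smooth_on A (f i)) \<Longrightarrow> smooth_on A (\<lambda>q. \<Sum>i\<in>S. f i q)"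
  unfolding smooth_sm using sm_sum by blast
lemma smooth_cong: "open A \<Longrightarrow> smooth_on A f \<Longrightarrow> (\<And>q. q \<in> A \<Longrightarrow> f q = g q) \<Longrightarrow> smooth_on A g"
  unfolding smooth_sm using sm_cong by blast


lemma D_comp_lin:
  assumes s: "bounded_linear s" and f: "f differentiable (at (s p))"
  shows "D v (\<lambda>q. f (s q)) p = D (s v) f (s p)"
    and "(\<lambda>q. f (s q)) differentiable (at p)"
proof -
  have h: "((\<lambda>q. f (s q)) has_derivative (\<lambda>v. D (s v) f (s p))) (at p)"
    using has_derivative_compose[OF bounded_linear_imp_has_derivative[OF s] D_works[OF f]] .
  show "D v (\<lambda>q. f (s q)) p = D (s v) f (s p)" using D_hasd[OF h] .
  show "(\<lambda>q. f (s q)) differentiable (at p)" using h differentiable_def by blast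
qed

lemma D_translate:
  assumes f: "f differentiable (at (p + c))"
  shows "D v (\<lambda>q. f (q + c)) p = D v f (p + c)"
    and "(\<lambda>q. f (q + c)) differentiable (at p)"
proof -
  have l: "((\<lambda>q. q + c) has_derivative (\<lambda>v. v)) (at p)"
    using has_derivative_add[OF has_derivative_ident has_derivative_const[of c]] by simp
  have h: "((\<lambda>q. f (q + c)) has_derivative (\<lambda>v. D v f (p + c))) (at p)"
    using has_derivative_compose[OF l D_works[OF f]] .
  show "D v (\<lambda>q. f (q + c)) p = D v f (p + c)" using D_hasd[OF h] .
  show "(\<lambda>q. f (q + c)) differentiable (at p)" using h differentiable_def by blast
qed

lemma mvt_dir:
  fixes f :: "pt \<Rightarrow> real"
  assumes h: "0 < h" and d: "\<And>\<tau>. 0 \<le> \<tau> \<Longrightarrow> \<tau> \<le> h \<Longrightarrow> f differentiable (at (x + \<tau> *\<^sub>R v))"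
  shows "\<exists>\<tau>\<in>{0<..<h}. f (x + h *\<^sub>R v) - f x = h * D v f (x + \<tau> *\<^sub>R v)"
proof -
  have "\<exists>\<tau>\<in>{0<..<h}. (\<lambda>t. f (x + t *\<^sub>R v)) h - (\<lambda>t. f (x + t *\<^sub>R v)) 0
        = (\<lambda>t s. s * D v f (x + t *\<^sub>R v)) \<tau> (h - 0)"
  proof (rule mvt_simple[OF h])
    fix t assume t: "0 \<le> t" "t \<le> h"
    have l: "((\<lambda>t. x + t *\<^sub>R v) has_derivative (\<lambda>s. s *\<^sub>R v)) (at t)"
      using has_derivative_add[OF has_derivative_const[of x] has_derivative_scaleR_left[OF has_derivative_ident, of v]]
      by simp
    have "((\<lambda>t. f (x + t *\<^sub>R v)) has_derivative (\<lambda>s. D (s *\<^sub>R v) f (x + t *\<^sub>R v))) (at t)"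
      using has_derivative_compose[OF l D_works[OF d[OF t]]] .
    moreover have "(\<lambda>s. D (s *\<^sub>R v) f (x + t *\<^sub>R v)) = (\<lambda>s. s * D v f (x + t *\<^sub>R v))"
      using D_scale_dir[OF d[OF t]] by (simp add: fun_eq_iff)
    ultimately show "((\<lambda>t. f (x + t *\<^sub>R v)) has_derivative (\<lambda>s. s * D v f (x + t *\<^sub>R v))) (at t within {0..h})"
      using has_derivative_at_withinI by metis
  qed
  then show ?thesis by simp
qed

lemma schwarz:
  assumes A: "open A" and p: "p \<in> A" and f: "smooth_on A f"
  shows "D u (D w f) p = D w (D u f) p"
proof (rule ccontr)
  define g1 where "g1 = D u (D w f)"
  define g2 where "g2 = D w (D u f)"
  assume ne: "D u (D w f) p \<noteq> D w (D u f) p"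
  then have ne': "g1 p \<noteq> g2 p" by (simp add: g1_def g2_def)
  define e where "e = \<bar>g1 p - g2 p\<bar> / 2"
  have e: "e > 0" using ne' by (simp add: e_def)
  have c1: "continuous (at p) g1" unfolding g1_def
    using smooth_diffble[OF smooth_D[OF smooth_D[OF f]] p] differentiable_imp_continuous_within by blast
  have c2: "continuous (at p) g2" unfolding g2_def
    using smooth_diffble[OF smooth_D[OF smooth_D[OF f]] p] differentiable_imp_continuous_within by blast
  obtain d1 where d1: "d1 > 0" "\<And>q. dist q p < d1 \<Longrightarrow> dist (g1 q) (g1 p) < e"
    using c1 e unfolding continuous_at_eps_delta by metis
  obtain d2 where d2: "d2 > 0" "\<And>q. dist q p < d2 \<Longrightarrow> dist (g2 q) (g2 p) < e"
    using c2 e unfolding continuous_at_eps_delta by metis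
  obtain d0 where d0: "d0 > 0" "ball p d0 \<subseteq> A"
    using A p open_contains_ball by blast
  define d where "d = min d0 (min d1 d2)"
  have d: "d > 0" using d0 d1 d2 by (simp add: d_def)
  define h where "h = d / (2 * (norm u + norm w + 1))"
  have np: "norm u + norm w + 1 > 0" by (simp add: add_nonneg_pos)
  have hpos: "h > 0" using d np unfolding h_def by simp
  have hb: "h * (norm u + norm w) < d"
  proof -
    have "h * (norm u + norm w) \<le> h * (norm u + norm w + 1)" using hpos by simp
    also have "\<dots> = d / 2" unfolding h_def using np by (simp add: field_simps)
    finally show ?thesis using d by simp
  qed
  have inball: "dist (p + s *\<^sub>R u + t *\<^sub>R w) p < d" if "0 \<le> s" "s \<le> h" "0 \<le> t" "t \<le> h" for s t
  proof -
    have "dist (p + s *\<^sub>R u + t *\<^sub>R w) p = norm (s *\<^sub>R u + t *\<^sub>R w)" by (simp add: dist_norm)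
    also have "\<dots> \<le> s * norm u + t * norm w"
      using norm_triangle_ineq[of "s *\<^sub>R u" "t *\<^sub>R w"] that by simp
    also have "\<dots> \<le> h * norm u + h * norm w"
      using that by (intro add_mono mult_right_mono) auto
    finally show ?thesis using hb by (simp add: distrib_left)
  qed
  have inA: "p + s *\<^sub>R u + t *\<^sub>R w \<in> A" if "0 \<le> s" "s \<le> h" "0 \<le> t" "t \<le> h" for s t
  proof -
    have "dist p (p + s *\<^sub>R u + t *\<^sub>R w) < d0" using inball[OF that] by (simp add: d_def dist_commute)
    then show ?thesis using d0 by auto
  qed
  have df: "f differentiable (at q)" "D w f differentiable (at q)" "D u f differentiable (at q)" if "q \<in> A" for q
    using smooth_diffble[OF f that] smooth_diffble[OF smooth_D[OF f] that] by auto
  define F1 where "F1 = (\<lambda>q. f (q + h *\<^sub>R u) - f q)"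
  have dF1: "F1 differentiable (at (p + \<tau> *\<^sub>R w))"
    and DF1: "D w F1 (p + \<tau> *\<^sub>R w) = D w f (p + \<tau> *\<^sub>R w + h *\<^sub>R u) - D w f (p + \<tau> *\<^sub>R w)"
    if "0 \<le> \<tau>" "\<tau> \<le> h" for \<tau>
  proof -
    have a1: "p + \<tau> *\<^sub>R w + h *\<^sub>R u \<in> A" using inA[of h \<tau>] that hpos by (simp add: algebra_simps)
    have a2: "p + \<tau> *\<^sub>R w \<in> A" using inA[of 0 \<tau>] that by simp
    have t1: "(\<lambda>q. f (q + h *\<^sub>R u)) differentiable (at (p + \<tau> *\<^sub>R w))"
      using D_translate(2)[OF df(1)[OF a1]] .
    show "F1 differentiable (at (p + \<tau> *\<^sub>R w))" unfolding F1_def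
      using t1 df(1)[OF a2] by (rule differentiable_diff)
    show "D w F1 (p + \<tau> *\<^sub>R w) = D w f (p + \<tau> *\<^sub>R w + h *\<^sub>R u) - D w f (p + \<tau> *\<^sub>R w)"
      unfolding F1_def D_diff[OF t1 df(1)[OF a2]] D_translate(1)[OF df(1)[OF a1]] ..
  qed
  obtain \<tau>1 where \<tau>1: "\<tau>1 \<in> {0<..<h}" "F1 (p + h *\<^sub>R w) - F1 p = h * D w F1 (p + \<tau>1 *\<^sub>R w)"
    using mvt_dir[OF hpos dF1] by blast
  obtain \<sigma>1 where \<sigma>1: "\<sigma>1 \<in> {0<..<h}"
    "D w f (p + \<tau>1 *\<^sub>R w + h *\<^sub>R u) - D w f (p + \<tau>1 *\<^sub>R w) = h * D u (D w f) (p + \<tau>1 *\<^sub>R w + \<sigma>1 *\<^sub>R u)"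
  proof -
    have "\<exists>\<sigma>\<in>{0<..<h}. D w f (p + \<tau>1 *\<^sub>R w + h *\<^sub>R u) - D w f (p + \<tau>1 *\<^sub>R w) = h * D u (D w f) (p + \<tau>1 *\<^sub>R w + \<sigma> *\<^sub>R u)"
    proof (rule mvt_dir[OF hpos])
      fix \<sigma> assume "0 \<le> \<sigma>" "\<sigma> \<le> h"
      then have "p + \<tau>1 *\<^sub>R w + \<sigma> *\<^sub>R u \<in> A" using inA[of \<sigma> \<tau>1] \<tau>1(1) by (simp add: algebra_simps)
      then show "D w f differentiable (at (p + \<tau>1 *\<^sub>R w + \<sigma> *\<^sub>R u))" using df by blast
    qed
    then show ?thesis using that by blast
  qed
  define q1 where "q1 = p + \<sigma>1 *\<^sub>R u + \<tau>1 *\<^sub>R w"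
  have q1: "dist q1 p < d" unfolding q1_def using inball \<tau>1(1) \<sigma>1(1) by simp
  have Delta1: "f (p + h *\<^sub>R u + h *\<^sub>R w) - f (p + h *\<^sub>R u) - f (p + h *\<^sub>R w) + f p = h * (h * g1 q1)"
  proof -
    have "f (p + h *\<^sub>R u + h *\<^sub>R w) - f (p + h *\<^sub>R u) - f (p + h *\<^sub>R w) + f p = F1 (p + h *\<^sub>R w) - F1 p"
      unfolding F1_def by (simp add: algebra_simps)
    also have "\<dots> = h * (h * g1 q1)"
      using \<tau>1(2) DF1[of \<tau>1] \<tau>1(1) \<sigma>1(2) unfolding g1_def q1_def by (simp add: algebra_simps)
    finally show ?thesis .
  qed
  define F2 where "F2 = (\<lambda>q. f (q + h *\<^sub>R w) - f q)"
  have dF2: "F2 differentiable (at (p + \<tau> *\<^sub>R u))"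
    and DF2: "D u F2 (p + \<tau> *\<^sub>R u) = D u f (p + \<tau> *\<^sub>R u + h *\<^sub>R w) - D u f (p + \<tau> *\<^sub>R u)"
    if "0 \<le> \<tau>" "\<tau> \<le> h" for \<tau>
  proof -
    have a1: "p + \<tau> *\<^sub>R u + h *\<^sub>R w \<in> A" using inA[of \<tau> h] that hpos by (simp add: algebra_simps)
    have a2: "p + \<tau> *\<^sub>R u \<in> A" using inA[of \<tau> 0] that by simp
    have t1: "(\<lambda>q. f (q + h *\<^sub>R w)) differentiable (at (p + \<tau> *\<^sub>R u))"
      using D_translate(2)[OF df(1)[OF a1]] .
    show "F2 differentiable (at (p + \<tau> *\<^sub>R u))" unfolding F2_def
      using t1 df(1)[OF a2] by (rule differentiable_diff)
    show "D u F2 (p + \<tau> *\<^sub>R u) = D u f (p + \<tau> *\<^sub>R u + h *\<^sub>R w) - D u f (p + \<tau> *\<^sub>R u)"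
      unfolding F2_def D_diff[OF t1 df(1)[OF a2]] D_translate(1)[OF df(1)[OF a1]] ..
  qed
  obtain \<tau>2 where \<tau>2: "\<tau>2 \<in> {0<..<h}" "F2 (p + h *\<^sub>R u) - F2 p = h * D u F2 (p + \<tau>2 *\<^sub>R u)"
    using mvt_dir[OF hpos dF2] by blast
  obtain \<sigma>2 where \<sigma>2: "\<sigma>2 \<in> {0<..<h}"
    "D u f (p + \<tau>2 *\<^sub>R u + h *\<^sub>R w) - D u f (p + \<tau>2 *\<^sub>R u) = h * D w (D u f) (p + \<tau>2 *\<^sub>R u + \<sigma>2 *\<^sub>R w)"
  proof -
    have "\<exists>\<sigma>\<in>{0<..<h}. D u f (p + \<tau>2 *\<^sub>R u + h *\<^sub>R w) - D u f (p + \<tau>2 *\<^sub>R u) = h * D w (D u f) (p + \<tau>2 *\<^sub>R u + \<sigma> *\<^sub>R w)"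
    proof (rule mvt_dir[OF hpos])
      fix \<sigma> assume "0 \<le> \<sigma>" "\<sigma> \<le> h"
      then have "p + \<tau>2 *\<^sub>R u + \<sigma> *\<^sub>R w \<in> A" using inA[of \<tau>2 \<sigma>] \<tau>2(1) by (simp add: algebra_simps)
      then show "D u f differentiable (at (p + \<tau>2 *\<^sub>R u + \<sigma> *\<^sub>R w))" using df by blast
    qed
    then show ?thesis using that by blast
  qed
  define q2 where "q2 = p + \<tau>2 *\<^sub>R u + \<sigma>2 *\<^sub>R w"
  have q2: "dist q2 p < d" unfolding q2_def using inball \<tau>2(1) \<sigma>2(1) by simp
  have Delta2: "f (p + h *\<^sub>R u + h *\<^sub>R w) - f (p + h *\<^sub>R u) - f (p + h *\<^sub>R w) + f p = h * (h * g2 q2)"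
  proof -
    have "f (p + h *\<^sub>R u + h *\<^sub>R w) - f (p + h *\<^sub>R u) - f (p + h *\<^sub>R w) + f p = F2 (p + h *\<^sub>R u) - F2 p"
      unfolding F2_def by (simp add: algebra_simps)
    also have "\<dots> = h * (h * g2 q2)"
      using \<tau>2(2) DF2[of \<tau>2] \<tau>2(1) \<sigma>2(2) unfolding g2_def q2_def by (simp add: algebra_simps)
    finally show ?thesis .
  qed
  have "g1 q1 = g2 q2" using Delta1 Delta2 hpos by simp
  moreover have "dist (g1 q1) (g1 p) < e" using d1 q1 by (simp add: d_def)
  moreover have "dist (g2 q2) (g2 p) < e" using d2 q2 by (simp add: d_def)
  ultimately have "\<bar>g1 p - g2 p\<bar> < 2 * e" by (simp add: dist_real_def)
  then show False by (simp add: e_def)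
qed

lemma schwarz_XY: "open A \<Longrightarrow> p \<in> A \<Longrightarrow> smooth_on A f \<Longrightarrow> dX i (dY j f) p = dY j (dX i f) p"
  unfolding dX_D dY_D by (rule schwarz)
lemma schwarz_YY: "open A \<Longrightarrow> p \<in> A \<Longrightarrow> smooth_on A f \<Longrightarrow> dY i (dY j f) p = dY j (dY i f) p"
  unfolding dY_D by (rule schwarz)

definition conic :: "pt set \<Rightarrow> bool" where
  "conic A \<longleftrightarrow> (\<forall>x y. (x, y) \<in> A \<longrightarrow> (\<forall>t>0. (x, t *\<^sub>R y) \<in> A))"

definition hom :: "pt set \<Rightarrow> real \<Rightarrow> (pt \<Rightarrow> real) \<Rightarrow> bool" where
  "hom A r f \<longleftrightarrow> (\<forall>x y. (x, y) \<in> A \<longrightarrow> (\<forall>t>0. f (x, t *\<^sub>R y) = t powr r * f (x, y)))"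

lemma homI: "(\<And>x y t. (x, y) \<in> A \<Longrightarrow> t > 0 \<Longrightarrow> f (x, t *\<^sub>R y) = t powr r * f (x, y)) \<Longrightarrow> hom A r f"
  unfolding hom_def by blast

lemma homD: "hom A r f \<Longrightarrow> (x, y) \<in> A \<Longrightarrow> t > 0 \<Longrightarrow> f (x, t *\<^sub>R y) = t powr r * f (x, y)"
  unfolding hom_def by blast

lemma conicD: "conic A \<Longrightarrow> (x, y) \<in> A \<Longrightarrow> t > 0 \<Longrightarrow> (x, t *\<^sub>R y) \<in> A"
  unfolding conic_def by blast

lemma bl_sigma: "bounded_linear (\<lambda>q::pt. (fst q, t *\<^sub>R snd q))"
  by (rule bounded_linear_Pair[OF bounded_linear_fst bounded_linear_compose[OF bounded_linear_scaleR_right bounded_linear_snd]])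

lemma hom_D_scale:
  assumes A: "open A" "conic A" and f: "hom A r f" "\<And>p. p \<in> A \<Longrightarrow> f differentiable (at p)"
    and xy: "(x, y) \<in> A" and t: "t > 0"
  shows "D (fst v, t *\<^sub>R snd v) f (x, t *\<^sub>R y) = t powr r * D v f (x, y)"
proof -
  let ?s = "\<lambda>q::pt. (fst q, t *\<^sub>R snd q)"
  have in1: "?s (x, y) \<in> A" using conicD[OF A(2) xy t] by simp
  have "D v (\<lambda>q. f (?s q)) (x, y) = D (?s v) f (?s (x, y))"
    by (rule D_comp_lin(1)[OF bl_sigma f(2)[OF in1]])
  moreover have "D v (\<lambda>q. f (?s q)) (x, y) = D v (\<lambda>q. t powr r * f q) (x, y)"
  proof (rule D_local[OF A(1) xy])
    fix q assume "q \<in> A" then show "f (?s q) = t powr r * f q"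
      using homD[OF f(1) _ t, of "fst q" "snd q"] by simp
  qed
  moreover have "D v (\<lambda>q. t powr r * f q) (x, y) = t powr r * D v f (x, y)"
    by (rule D_cmult[OF f(2)[OF xy]])
  ultimately show ?thesis by simp
qed

lemma hom_dY:
  assumes A: "open A" "conic A" and f: "hom A r f" "\<And>p. p \<in> A \<Longrightarrow> f differentiable (at p)"
  shows "hom A (r - 1) (dY j f)"
proof (rule homI)
  fix x y and t :: real assume xy: "(x, y) \<in> A" and t: "t > 0"
  have in1: "(x, t *\<^sub>R y) \<in> A" using conicD[OF A(2) xy t] .
  have "D (t *\<^sub>R (0, axis j 1)) f (x, t *\<^sub>R y) = t powr r * D (0, axis j 1) f (x, y)"
    using hom_D_scale[OF A f xy t, of "(0, axis j 1)"] by simp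
  moreover have "D (t *\<^sub>R (0, axis j 1)) f (x, t *\<^sub>R y) = t * dY j f (x, t *\<^sub>R y)"
    using D_scale_dir[OF f(2)[OF in1], of t "(0, axis j 1)"] by (simp add: dY_D)
  ultimately have "t * dY j f (x, t *\<^sub>R y) = t powr r * dY j f (x, y)" by (simp add: dY_D)
  then show "dY j f (x, t *\<^sub>R y) = t powr (r - 1) * dY j f (x, y)"
    using t by (simp add: powr_diff field_simps)
qed

lemma hom_dX:
  assumes A: "open A" "conic A" and f: "hom A r f" "\<And>p. p \<in> A \<Longrightarrow> f differentiable (at p)"
  shows "hom A r (dX j f)"
proof (rule homI)
  fix x y and t :: real assume xy: "(x, y) \<in> A" and t: "t > 0"
  show "dX j f (x, t *\<^sub>R y) = t powr r * dX j f (x, y)"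
    using hom_D_scale[OF A f xy t, of "(axis j 1, 0)"] by (simp add: dX_D)
qed

lemma euler:
  assumes A: "open A" "conic A" and f: "hom A r f" and fd: "f differentiable (at (x, y))" and xy: "(x, y) \<in> A"
  shows "(\<Sum>j\<in>UNIV. y $ j * dY j f (x, y)) = r * f (x, y)"
proof -
  have l: "((\<lambda>t. (x, t *\<^sub>R y)) has_derivative (\<lambda>s. (0, s *\<^sub>R y))) (at 1)"
    using has_derivative_Pair[OF has_derivative_const[of x] has_derivative_scaleR_left[OF has_derivative_ident, of y]]
    by simp
  have fd1: "f differentiable (at (x, 1 *\<^sub>R y))" using fd by simp
  have "((\<lambda>t. f (x, t *\<^sub>R y)) has_derivative (\<lambda>s. D (0, s *\<^sub>R y) f (x, 1 *\<^sub>R y))) (at 1)"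
    using has_derivative_compose[OF l D_works[OF fd1]] .
  moreover have "(\<lambda>s. D (0, s *\<^sub>R y) f (x, 1 *\<^sub>R y)) = (\<lambda>s. D (0, y) f (x, y) * s)"
  proof
    fix s
    have "(0::real^2, s *\<^sub>R y) = s *\<^sub>R (0, y)" by simp
    then show "D (0, s *\<^sub>R y) f (x, 1 *\<^sub>R y) = D (0, y) f (x, y) * s"
      using D_scale_dir[OF fd, of s "(0, y)"] by simp
  qed
  ultimately have g: "((\<lambda>t. f (x, t *\<^sub>R y)) has_field_derivative D (0, y) f (x, y)) (at 1)"
    unfolding has_field_derivative_def by simp
  have "((\<lambda>t. t powr r * f (x, y)) has_field_derivative (r * 1 powr (r - 1)) * f (x, y)) (at 1)"
    by (intro DERIV_cmult_right has_real_derivative_powr) simp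
  then have "((\<lambda>t. t powr r * f (x, y)) has_field_derivative r * f (x, y)) (at 1)" by simp
  moreover have "((\<lambda>t. t powr r * f (x, y)) has_field_derivative D (0, y) f (x, y)) (at 1)"
  proof (rule has_field_derivative_transform_within_open[OF g, of "{0<..}"])
    fix t :: real assume "t \<in> {0<..}" then show "f (x, t *\<^sub>R y) = t powr r * f (x, y)"
      using homD[OF f xy] by simp
  qed auto
  ultimately have "D (0, y) f (x, y) = r * f (x, y)" using DERIV_unique by blast
  then show ?thesis using D_dirY[OF fd] by simp
qed

lemma hom_const: "hom A 0 (\<lambda>q. c)" by (rule homI) simp
lemma hom_zero: "hom A r (\<lambda>q. 0)" by (rule homI) simp
lemma hom_snd: "hom A 1 (\<lambda>q. snd q $ k)" by (rule homI) simp
lemma hom_fst: "hom A 0 (\<lambda>q. fst q $ k)" by (rule homI) simp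
lemma hom_add: "hom A r f \<Longrightarrow> hom A r g \<Longrightarrow> hom A r (\<lambda>q. f q + g q)"
  unfolding hom_def by (simp add: distrib_left)
lemma hom_diff: "hom A r f \<Longrightarrow> hom A r g \<Longrightarrow> hom A r (\<lambda>q. f q - g q)"
  unfolding hom_def by (simp add: right_diff_distrib)
lemma hom_minus: "hom A r f \<Longrightarrow> hom A r (\<lambda>q. - f q)"
  unfolding hom_def by simp
lemma hom_cmult: "hom A r f \<Longrightarrow> hom A r (\<lambda>q. c * f q)"
  unfolding hom_def by simp
lemma hom_mult: "hom A r f \<Longrightarrow> hom A s g \<Longrightarrow> hom A (r + s) (\<lambda>q. f q * g q)"
  unfolding hom_def by (simp add: powr_add)
lemma hom_mult': "hom A r f \<Longrightarrow> hom A s g \<Longrightarrow> u = r + s \<Longrightarrow> hom A u (\<lambda>q. f q * g q)"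
  using hom_mult by blast
lemma hom_inverse: "hom A r f \<Longrightarrow> hom A (- r) (\<lambda>q. inverse (f q))"
  unfolding hom_def by (simp add: powr_minus)
lemma hom_exp: "hom A 0 f \<Longrightarrow> hom A 0 (\<lambda>q. exp (f q))"
  unfolding hom_def by simp
lemma hom_sum: "finite S \<Longrightarrow> (\<And>i. i \<in> S \<Longrightarrow> hom A r (f i)) \<Longrightarrow> hom A r (\<lambda>q. \<Sum>i\<in>S. f i q)"
  unfolding hom_def by (simp add: sum_distrib_left)
lemma hom_cong: "conic A \<Longrightarrow> hom A r f \<Longrightarrow> (\<And>q. q \<in> A \<Longrightarrow> f q = g q) \<Longrightarrow> hom A r g"
  unfolding hom_def conic_def by metis
lemma hom_homog_on: "homog_on A n f \<Longrightarrow> hom A (real n) f"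
  unfolding hom_def homog_on_def by (auto simp: powr_realpow)


definition dt :: "real^2 \<Rightarrow> real^2 \<Rightarrow> real" where
  "dt u v = (\<Sum>i\<in>UNIV. u$i * v$i)"

definition bil :: "real^2^2 \<Rightarrow> real^2 \<Rightarrow> real^2 \<Rightarrow> real" where
  "bil N u v = (\<Sum>i\<in>UNIV. \<Sum>j\<in>UNIV. u$i * N$i$j * v$j)"

lemma dt_2: "dt u v = u$1 * v$1 + u$2 * v$2" by (simp add: dt_def sum_2)
lemma bil_2: "bil N u v = u$1 * N$1$1 * v$1 + u$1 * N$1$2 * v$2 + u$2 * N$2$1 * v$1 + u$2 * N$2$2 * v$2"
  by (simp add: bil_def sum_2)
lemma mv_2: "((N::real^2^2) *v v) $ i = N$i$1 * v$1 + N$i$2 * v$2" by (simp add: matrix_vector_mult_def sum_2)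

lemma vec2_eqI: "(u::real^2)$1 = v$1 \<Longrightarrow> u$2 = v$2 \<Longrightarrow> u = v"
  by (simp add: vec_eq_iff forall_2)

lemma det_nz_ker: "(\<And>v. (N::real^2^2) *v v = 0 \<Longrightarrow> v = 0) \<Longrightarrow> det N \<noteq> 0"
  using matrix_left_invertible_ker[of N] invertible_left_inverse[of N] invertible_det_nz[of N] by blast

lemma ker_det_nz: "det (N::real^2^2) \<noteq> 0 \<Longrightarrow> N *v v = 0 \<Longrightarrow> v = 0"
  using matrix_left_invertible_ker[of N] invertible_left_inverse[of N] invertible_det_nz[of N] by blast

locale frm =
  fixes y l M :: "real^2" and g gi :: "real^2^2" and F e :: real
  assumes frame: "\<And>i j. g$i$j = l$i*l$j + e*M$i*M$j"
    and e: "e = 1 \<or> e = -1"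
    and ggi: "g ** gi = mat 1"
    and Fnz: "F \<noteq> 0"
    and H3: "dt y l = F"
    and H6: "\<And>i. (\<Sum>j\<in>UNIV. g$i$j * y$j) = F * l$i"
begin

definition mu where "mu = gi *v M"
definition lu where "lu = (1/F) *\<^sub>R y"

lemma e2: "e * e = 1" using e by auto

lemma gsym: "g$i$j = g$j$i" by (simp add: frame mult_ac)

lemma My: "dt M y = 0"
proof -
  have "F * l$i + e * M$i * dt M y = F * l$i" for i
  proof -
    have "(\<Sum>j\<in>UNIV. g$i$j * y$j) = l$i * dt y l + e * M$i * dt M y"
      by (simp add: frame dt_2 sum_2 algebra_simps)
    then show ?thesis using H6[of i] H3 by simp
  qed
  then have z: "e * M$i * dt M y = 0" for i by simp
  have "y$1 * (e * M$1 * dt M y) + y$2 * (e * M$2 * dt M y) = 0" by (simp only: z mult_zero_right add_0)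
  then have "e * dt M y * dt M y = 0"
    by (simp only: dt_2) (simp add: algebra_simps)
  then show ?thesis using e by auto
qed

lemma g_mu: "g *v mu = M"
  unfolding mu_def by (simp add: matrix_vector_mul_assoc ggi)

lemma g_mu_i: "(\<Sum>j\<in>UNIV. g$i$j * mu$j) = M$i"
  using g_mu by (simp add: vec_eq_iff matrix_vector_mult_def)

lemma l_mu: "dt l mu = 0"
proof -
  have "F * dt l mu = (\<Sum>i\<in>UNIV. (\<Sum>j\<in>UNIV. g$i$j * y$j) * mu$i)"
    by (simp only: H6) (simp add: dt_def sum_distrib_left mult_ac)
  also have "\<dots> = (\<Sum>j\<in>UNIV. y$j * (\<Sum>i\<in>UNIV. g$j$i * mu$i))"
    by (simp add: sum_2 gsym algebra_simps)
  also have "\<dots> = dt y M" by (simp add: g_mu_i dt_def)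
  also have "\<dots> = 0" using My by (simp add: dt_def mult.commute)
  finally show ?thesis using Fnz by simp
qed

lemma M_nz: "M \<noteq> 0"
proof
  assume "M = 0"
  then have "g$i$j = l$i * l$j" for i j by (simp add: frame)
  then have "det g = 0" by (simp add: det_2)
  moreover have "det g * det gi = 1" using ggi det_mul[of g gi] by simp
  ultimately show False by simp
qed

lemma M_mu: "dt M mu = e"
proof -
  have "M$i = e * M$i * dt M mu" for i
  proof -
    have "M$i = (\<Sum>j\<in>UNIV. g$i$j * mu$j)" by (simp add: g_mu_i)
    also have "\<dots> = l$i * dt l mu + e * M$i * dt M mu" by (simp add: frame dt_2 sum_2 algebra_simps)
    finally show ?thesis using l_mu by simp
  qed
  then have "M$i * (1 - e * dt M mu) = 0" for i by (simp add: algebra_simps)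
  moreover obtain i where "M$i \<noteq> 0" using M_nz by (auto simp: vec_eq_iff)
  ultimately have "e * dt M mu = 1" by (metis eq_iff_diff_eq_0 mult_eq_0_iff)
  then have "e * (e * dt M mu) = e" by simp
  then show ?thesis using e2 by (simp add: mult.assoc[symmetric])
qed

lemma l_lu: "dt l lu = 1" using H3 Fnz by (simp add: lu_def dt_def sum_divide_distrib[symmetric] mult_ac)

lemma g_lu_i: "(\<Sum>j\<in>UNIV. g$i$j * lu$j) = l$i"
  using H6[of i] Fnz by (simp add: lu_def sum_divide_distrib[symmetric] mult_ac)

lemma M_lu: "dt M lu = 0" using My by (simp add: lu_def dt_def sum_divide_distrib[symmetric] mult_ac)

lemma bil_alt: "bil N u v = (\<Sum>i\<in>UNIV. u$i * (\<Sum>j\<in>UNIV. N$i$j * v$j))"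
  by (simp add: bil_def sum_distrib_left mult_ac)
lemma bil_g_mu: "bil g u mu = dt u M"
  unfolding bil_alt g_mu_i dt_def ..
lemma bil_g_lu: "bil g u lu = dt u l"
  unfolding bil_alt g_lu_i dt_def ..


lemma dt_comm: "dt u v = dt v u" by (simp add: dt_def mult.commute)

definition cQ :: "2 \<Rightarrow> real^2" where "cQ a = (if a = 1 then lu else mu)"
definition Q :: "real^2^2" where "Q = (\<chi> i j. cQ j $ i)"

lemma TQ: "transpose Q ** (N ** Q) = (\<chi> a b. bil N (cQ a) (cQ b))"
  by (simp add: vec_eq_iff forall_2 matrix_matrix_mult_def transpose_def Q_def sum_2 bil_2 algebra_simps)

lemma detT: "det (\<chi> a b. bil N (cQ a) (cQ b)) = det Q * det Q * det N"
proof -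
  have "det (\<chi> a b. bil N (cQ a) (cQ b)) = det (transpose Q ** (N ** Q))" by (simp add: TQ)
  also have "\<dots> = det Q * (det N * det Q)" by (simp add: det_mul det_transpose)
  finally show ?thesis by (simp add: mult_ac)
qed

lemma cQ12: "cQ 1 = lu" "cQ 2 = mu" by (simp_all add: cQ_def)

lemma det2x: "det (\<chi> a b. f a b :: real^2^2) = f 1 1 * f 2 2 - f 1 2 * f 2 1"
  by (simp add: det_2)

lemma detQ: "det Q \<noteq> 0"
proof -
  have "det (\<chi> a b. bil g (cQ a) (cQ b)) = e"
    by (simp add: det2x cQ12 bil_g_mu bil_g_lu dt_comm[of lu] dt_comm[of mu] l_lu M_lu l_mu M_mu)
  then show ?thesis using detT[of g] e by auto
qed

lemma basis: "dt lu w = 0 \<Longrightarrow> dt mu w = 0 \<Longrightarrow> w = 0"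
proof -
  assume a: "dt lu w = 0" "dt mu w = 0"
  have "transpose Q *v w = 0"
    using a by (simp add: vec_eq_iff forall_2 matrix_vector_mult_def transpose_def Q_def cQ_def dt_def)
  moreover have "det (transpose Q) \<noteq> 0" using detQ by (simp add: det_transpose)
  ultimately show "w = 0" using ker_det_nz by blast
qed

lemma nondeg:
  fixes ph :: "real^2" and Ph N :: "real^2^2" and P :: real
  assumes P: "P \<noteq> 0"
    and H4: "dt y ph = 0"
    and H5: "\<And>i. (\<Sum>j\<in>UNIV. Ph$i$j * y$j) = - ph$i"
    and Phsym: "\<And>i j. Ph$i$j = Ph$j$i"
    and N: "\<And>i j. N$i$j = P * (g$i$j + 2*F*(ph$i*l$j + l$i*ph$j) + F^2*(2*ph$i*ph$j + Ph$i$j))"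
    and an: "F^2 * (\<Sum>i\<in>UNIV. \<Sum>j\<in>UNIV. (Ph$i$j + ph$i*ph$j) * mu$i * mu$j) + e \<noteq> 0"
  shows "det N \<noteq> 0"
proof -
  have bilN: "bil N u v = P * (bil g u v + 2*F*(dt u ph * dt l v + dt u l * dt ph v) + F^2*(2 * dt u ph * dt ph v + bil Ph u v))" for u v
    by (simp add: bil_2 dt_2 N algebra_simps)
  have lph: "dt lu ph = 0" using H4 by (simp add: lu_def dt_def sum_divide_distrib[symmetric] mult_ac)
  have lph': "dt ph lu = 0" using lph by (simp add: dt_comm)
  have PhL: "bil Ph u lu = - dt u ph / F" for u
  proof -
    have "(\<Sum>j\<in>UNIV. Ph$i$j * lu$j) = - ph$i / F" for i
      using H5[of i] by (simp add: lu_def sum_divide_distrib[symmetric] mult_ac)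
    then show ?thesis unfolding bil_alt by (simp add: dt_def sum_divide_distrib[symmetric] sum_negf)
  qed
  have Phc: "bil Ph u v = bil Ph v u" for u v by (simp add: bil_2 Phsym algebra_simps)
  define pm where "pm = dt mu ph"
  define pmm where "pmm = bil Ph mu mu"
  have an': "F^2 * (pm * pm + pmm) + e \<noteq> 0"
  proof -
    have "(\<Sum>i\<in>UNIV. \<Sum>j\<in>UNIV. (Ph$i$j + ph$i*ph$j) * mu$i * mu$j) = pm * pm + pmm"
      by (simp add: pm_def pmm_def sum_2 bil_2 dt_2 algebra_simps)
    then show ?thesis using an by simp
  qed
  have B11: "bil N lu lu = P"
    using PhL[of lu] by (simp add: bilN bil_g_lu dt_comm[of lu] l_lu lph lph')
  have B12: "bil N lu mu = P * F * pm"
    using PhL[of mu] Phc[of lu mu] Fnz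
    by (simp add: bilN bil_g_mu dt_comm[of lu] dt_comm[of mu] M_lu l_lu lph lph' pm_def l_mu power2_eq_square field_simps)
  have B21: "bil N mu lu = P * F * pm"
    using PhL[of mu] Fnz
    by (simp add: bilN bil_g_lu dt_comm[of lu] dt_comm[of mu] l_mu l_lu lph lph' pm_def power2_eq_square field_simps)
  have B22: "bil N mu mu = P * (e + F^2 * (2 * pm * pm + pmm))"
    by (simp add: bilN bil_g_mu dt_comm[of mu] M_mu l_mu pm_def pmm_def)
  have "det (\<chi> a b. bil N (cQ a) (cQ b)) = P * P * (F^2 * (pm * pm + pmm) + e)"
    by (simp add: det2x cQ12 B11 B12 B21 B22 algebra_simps power2_eq_square)
  then have "det Q * det Q * det N \<noteq> 0" using detT[of N] P an' by simp
  then show ?thesis by auto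
qed

end


lemma matrix_inv_props:
  fixes M :: "real^2^2"
  assumes "det M \<noteq> 0"
  shows "M ** matrix_inv M = mat 1" "matrix_inv M ** M = mat 1"
proof -
  have "invertible M" using assms invertible_det_nz by blast
  then have "\<exists>A'. M ** A' = mat 1 \<and> A' ** M = mat 1" unfolding invertible_def .
  then have "M ** matrix_inv M = mat 1 \<and> matrix_inv M ** M = mat 1"
    unfolding matrix_inv_def by (rule someI_ex)
  then show "M ** matrix_inv M = mat 1" "matrix_inv M ** M = mat 1" by auto
qed

definition adj2 :: "real^2^2 \<Rightarrow> 2 \<Rightarrow> 2 \<Rightarrow> real" where
  "adj2 M i j = (if i = 1 \<and> j = 1 then M$2$2 else if i = 1 \<and> j = 2 then - M$1$2
      else if i = 2 \<and> j = 1 then - M$2$1 else M$1$1)"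

lemma matrix_inv_2:
  fixes M :: "real^2^2"
  assumes d: "det M \<noteq> 0"
  shows "matrix_inv M $ i $ j = adj2 M i j / det M"
proof -
  define B :: "real^2^2" where "B = (\<chi> i j. adj2 M i j / det M)"
  have dd: "M$1$1 * M$2$2 - M$1$2 * M$2$1 \<noteq> 0" using d by (simp add: det_2)
  have "B ** M = mat 1" using d
    unfolding B_def
    by (simp add: vec_eq_iff forall_2 matrix_matrix_mult_def sum_2 mat_def adj2_def)
      (simp add: det_2 diff_divide_distrib[symmetric] add_divide_distrib[symmetric] dd algebra_simps)
  then have "B = B ** (M ** matrix_inv M)" using matrix_inv_props(1)[OF d] by simp
  also have "\<dots> = matrix_inv M" using \<open>B ** M = mat 1\<close> by (simp add: matrix_mul_assoc)
  finally have "matrix_inv M = B" by simp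
  then show ?thesis unfolding B_def by simp
qed

lemma smooth_matinv:
  fixes M :: "pt \<Rightarrow> real^2^2"
  assumes A: "open A" and M: "\<And>i j. smooth_on A (\<lambda>p. M p $ i $ j)" and d: "\<And>p. p \<in> A \<Longrightarrow> det (M p) \<noteq> 0"
  shows "smooth_on A (\<lambda>p. matrix_inv (M p) $ i $ j)"
proof -
  have "smooth_on A (\<lambda>p. M p $1$1 * M p $2$2 - M p $1$2 * M p $2$1)"
    by (intro smooth_diff smooth_mult A M)
  then have sdet: "smooth_on A (\<lambda>p. det (M p))" by (simp add: det_2)
  have sadj: "smooth_on A (\<lambda>p. adj2 (M p) i j)"
    using exhaust_2[of i] exhaust_2[of j]
    by (auto simp: adj2_def intro!: smooth_minus A M)
  have "smooth_on A (\<lambda>p. adj2 (M p) i j * inverse (det (M p)))"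
    by (intro smooth_mult smooth_inverse A sadj sdet d)
  then show ?thesis
    by (rule smooth_cong[OF A]) (simp add: matrix_inv_2 d divide_inverse)
qed

lemma sum_axis: "(\<Sum>k\<in>UNIV. axis (j::2) (1::real) $ k * c k) = c j"
  using exhaust_2[of j] by (auto simp: axis_def sum_2)

lemma sum_axis': "(\<Sum>k\<in>UNIV. c k * axis (j::2) (1::real) $ k) = c j"
  using exhaust_2[of j] by (auto simp: axis_def sum_2)

lemma dY_snd: "dY j (\<lambda>q. snd q $ k) p = (if k = j then 1 else 0)"
  by (simp add: dY_D D_snd axis_def)
lemma dX_snd: "dX j (\<lambda>q. snd q $ k) p = 0"
  by (simp add: dX_D D_snd)

abbreviation sq :: "(pt \<Rightarrow> real) \<Rightarrow> pt \<Rightarrow> real" where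
  "sq K \<equiv> (\<lambda>q. (K q)^2)"

lemma smooth_sq: "open A \<Longrightarrow> smooth_on A K \<Longrightarrow> smooth_on A (sq K)"
  using smooth_mult[of A K K] by (simp add: power2_eq_square)

lemma hom_sq: "hom A 1 K \<Longrightarrow> hom A 2 (sq K)"
  using hom_mult[of A 1 K 1 K] by (simp add: power2_eq_square)

locale fin =
  fixes A :: "pt set" and K :: "pt \<Rightarrow> real"
  assumes opn: "open A" and cone: "conic A" and smK: "smooth_on A K" and homK: "hom A 1 K"
    and nzK: "\<And>p. p \<in> A \<Longrightarrow> K p \<noteq> 0" and ndg: "\<And>p. p \<in> A \<Longrightarrow> det (gmat K p) \<noteq> 0"
begin

lemma smL: "smooth_on A (sq K)" using smooth_sq[OF opn smK] .
lemma homL: "hom A 2 (sq K)" using hom_sq[OF homK] .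

lemma dfb: "smooth_on A f \<Longrightarrow> (\<And>p. p \<in> A \<Longrightarrow> f differentiable (at p))"
  using smooth_diffble by blast

lemma hom_dY_sm: "hom A r f \<Longrightarrow> smooth_on A f \<Longrightarrow> hom A (r - 1) (dY j f)"
  using hom_dY[OF opn cone] dfb by blast
lemma hom_dX_sm: "hom A r f \<Longrightarrow> smooth_on A f \<Longrightarrow> hom A r (dX j f)"
  using hom_dX[OF opn cone] dfb by blast

lemma euler_sm: "hom A r f \<Longrightarrow> smooth_on A f \<Longrightarrow> (x, y) \<in> A \<Longrightarrow> (\<Sum>j\<in>UNIV. y $ j * dY j f (x, y)) = r * f (x, y)"
  using euler[OF opn cone] dfb by blast

lemma gmat_eq: "gmat K p $ i $ j = dY i (dY j (sq K)) p / 2"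
  by (simp add: gmat_def)

lemma sm_g: "smooth_on A (\<lambda>p. gmat K p $ i $ j)"
proof -
  have "smooth_on A (\<lambda>p. dY i (dY j (sq K)) p * inverse 2)"
    by (intro smooth_mult opn smooth_dY smL smooth_const)
  then show ?thesis by (rule smooth_cong[OF opn]) (simp add: gmat_eq)
qed

lemma hom_L1: "hom A 1 (dY j (sq K))"
  using hom_dY_sm[OF homL smL] by simp

lemma hom_g: "hom A 0 (\<lambda>p. gmat K p $ i $ j)"
proof -
  have "hom A 0 (dY i (dY j (sq K)))"
    using hom_dY_sm[OF hom_L1 smooth_dY[OF smL]] by simp
  then have "hom A 0 (\<lambda>p. inverse 2 * dY i (dY j (sq K)) p)" by (rule hom_cmult)
  then show ?thesis by (rule hom_cong[OF cone]) (simp add: gmat_eq)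
qed

lemma gsym: "p \<in> A \<Longrightarrow> gmat K p $ i $ j = gmat K p $ j $ i"
  unfolding gmat_eq using schwarz_YY[OF opn _ smL] by simp

lemma gmat_scale: "(x, y) \<in> A \<Longrightarrow> t > 0 \<Longrightarrow> gmat K (x, t *\<^sub>R y) = gmat K (x, y)"
  using homD[OF hom_g] by (simp add: vec_eq_iff)

lemma ginv_scale: "(x, y) \<in> A \<Longrightarrow> t > 0 \<Longrightarrow> ginv K (x, t *\<^sub>R y) = ginv K (x, y)"
  unfolding ginv_def using gmat_scale by simp

lemma hom_ginv: "hom A 0 (\<lambda>p. ginv K p $ i $ j)"
  by (rule homI) (simp add: ginv_scale)

lemma sm_ginv: "smooth_on A (\<lambda>p. ginv K p $ i $ j)"
  unfolding ginv_def by (rule smooth_matinv[OF opn sm_g ndg])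

lemma g_ginv: "p \<in> A \<Longrightarrow> gmat K p ** ginv K p = mat 1"
  unfolding ginv_def using matrix_inv_props ndg by blast
lemma ginv_g: "p \<in> A \<Longrightarrow> ginv K p ** gmat K p = mat 1"
  unfolding ginv_def using matrix_inv_props ndg by blast

definition EE :: "2 \<Rightarrow> pt \<Rightarrow> real" where
  "EE l p = (\<Sum>k\<in>UNIV. snd p $ k * dX k (dY l (sq K)) p) - dX l (sq K) p"

lemma spray_EE: "spray K i p = (1/4) * (\<Sum>l\<in>UNIV. ginv K p $ i $ l * EE l p)"
  by (simp add: spray_def EE_def)

lemma sm_EE: "smooth_on A (EE l)"
proof -
  have "smooth_on A (\<lambda>p. (\<Sum>k\<in>UNIV. snd p $ k * dX k (dY l (sq K)) p) - dX l (sq K) p)"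
    by (intro smooth_diff smooth_sum smooth_mult opn smooth_snd smooth_dX smooth_dY smL) auto
  then show ?thesis unfolding EE_def[abs_def] .
qed

lemma hom_EE: "hom A 2 (EE l)"
proof -
  have h1: "hom A 1 (dX k (dY l (sq K)))" for k
    using hom_dX_sm[OF hom_L1 smooth_dY[OF smL]] .
  have "hom A 2 (\<lambda>p. (\<Sum>k\<in>UNIV. snd p $ k * dX k (dY l (sq K)) p) - dX l (sq K) p)"
    by (intro hom_diff hom_sum hom_mult'[OF hom_snd h1] hom_dX_sm[OF homL smL] smL) auto
  then show ?thesis unfolding EE_def[abs_def] .
qed

lemma sm_G: "smooth_on A (spray K i)"
proof -
  have "smooth_on A (\<lambda>p. (1/4) * (\<Sum>l\<in>UNIV. ginv K p $ i $ l * EE l p))"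
    by (intro smooth_mult smooth_sum opn smooth_const sm_ginv sm_EE) auto
  then show ?thesis unfolding spray_EE[abs_def] .
qed

lemma hom_G: "hom A 2 (spray K i)"
proof -
  have "hom A 2 (\<lambda>p. (1/4) * (\<Sum>l\<in>UNIV. ginv K p $ i $ l * EE l p))"
    by (intro hom_cmult hom_sum hom_mult'[OF hom_ginv hom_EE]) auto
  then show ?thesis unfolding spray_EE[abs_def] .
qed

lemma gG: "p \<in> A \<Longrightarrow> (\<Sum>i\<in>UNIV. gmat K p $ l $ i * spray K i p) = EE l p / 4"
proof -
  assume p: "p \<in> A"
  define E where "E = (\<chi> l. EE l p)"
  have "(\<chi> i. spray K i p) = (1/4) *\<^sub>R (ginv K p *v E)"
    by (simp add: vec_eq_iff spray_EE matrix_vector_mult_def E_def)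
  then have "gmat K p *v (\<chi> i. spray K i p) = (1/4) *\<^sub>R (gmat K p *v (ginv K p *v E))"
    by (simp add: matrix_vector_mult_def vec_eq_iff sum_distrib_left mult_ac)
  also have "\<dots> = (1/4) *\<^sub>R E" by (simp add: matrix_vector_mul_assoc g_ginv[OF p])
  finally have "(gmat K p *v (\<chi> i. spray K i p)) $ l = ((1/4) *\<^sub>R E) $ l" by simp
  then show ?thesis by (simp add: matrix_vector_mult_def E_def)
qed


lemma dYY_g: "dY l (dY i (sq K)) p = 2 * gmat K p $ l $ i"
  by (simp add: gmat_eq)

lemma dYL_g: "(x, y) \<in> A \<Longrightarrow> dY i (sq K) (x, y) = 2 * (\<Sum>l\<in>UNIV. y $ l * gmat K (x, y) $ l $ i)"
proof -
  assume xy: "(x, y) \<in> A"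
  have "(\<Sum>l\<in>UNIV. y $ l * dY l (dY i (sq K)) (x, y)) = 1 * dY i (sq K) (x, y)"
    by (rule euler_sm[OF hom_L1 smooth_dY[OF smL] xy])
  then show ?thesis by (simp add: dYY_g sum_distrib_left mult_ac)
qed

lemma sum_yEE: "(x, y) \<in> A \<Longrightarrow> (\<Sum>l\<in>UNIV. y $ l * EE l (x, y)) = (\<Sum>k\<in>UNIV. y $ k * dX k (sq K) (x, y))"
proof -
  assume xy: "(x, y) \<in> A"
  have e1: "(\<Sum>l\<in>UNIV. y $ l * dX k (dY l (sq K)) (x, y)) = 2 * dX k (sq K) (x, y)" for k
  proof -
    have "(\<Sum>l\<in>UNIV. y $ l * dX k (dY l (sq K)) (x, y)) = (\<Sum>l\<in>UNIV. y $ l * dY l (dX k (sq K)) (x, y))"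
      using schwarz_XY[OF opn xy smL] by simp
    also have "\<dots> = 2 * dX k (sq K) (x, y)"
      by (rule euler_sm[OF hom_dX_sm[OF homL smL] smooth_dX[OF smL] xy])
    finally show ?thesis .
  qed
  have "(\<Sum>l\<in>UNIV. y $ l * EE l (x, y))
      = (\<Sum>l\<in>UNIV. \<Sum>k\<in>UNIV. y $ l * (y $ k * dX k (dY l (sq K)) (x, y))) - (\<Sum>l\<in>UNIV. y $ l * dX l (sq K) (x, y))"
    by (simp add: EE_def right_diff_distrib sum_distrib_left sum_subtractf)
  also have "(\<Sum>l\<in>UNIV. \<Sum>k\<in>UNIV. y $ l * (y $ k * dX k (dY l (sq K)) (x, y)))
      = (\<Sum>k\<in>UNIV. y $ k * (\<Sum>l\<in>UNIV. y $ l * dX k (dY l (sq K)) (x, y)))"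
    by (subst sum.swap) (simp add: sum_distrib_left mult_ac)
  also have "\<dots> = (\<Sum>k\<in>UNIV. y $ k * (2 * dX k (sq K) (x, y)))" by (simp add: e1)
  also have "\<dots> = 2 * (\<Sum>k\<in>UNIV. y $ k * dX k (sq K) (x, y))"
    by (simp add: sum_distrib_left mult.left_commute)
  finally show ?thesis by simp
qed

lemma star: "(x, y) \<in> A \<Longrightarrow> (\<Sum>i\<in>UNIV. spray K i (x, y) * dY i (sq K) (x, y))
    = 1/2 * (\<Sum>k\<in>UNIV. y $ k * dX k (sq K) (x, y))"
proof -
  assume xy: "(x, y) \<in> A"
  have "(\<Sum>i\<in>UNIV. spray K i (x, y) * dY i (sq K) (x, y))
       = (\<Sum>i\<in>UNIV. \<Sum>l\<in>UNIV. 2 * y $ l * (gmat K (x, y) $ l $ i * spray K i (x, y)))"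
    by (simp add: dYL_g[OF xy] sum_distrib_left sum_distrib_right mult_ac)
  also have "\<dots> = (\<Sum>l\<in>UNIV. 2 * y $ l * (\<Sum>i\<in>UNIV. gmat K (x, y) $ l $ i * spray K i (x, y)))"
    by (subst sum.swap) (simp add: sum_distrib_left)
  also have "\<dots> = (\<Sum>l\<in>UNIV. 2 * y $ l * (EE l (x, y) / 4))" by (simp add: gG[OF xy])
  also have "\<dots> = 1/2 * (\<Sum>l\<in>UNIV. y $ l * EE l (x, y))" by (simp add: sum_distrib_left)
  also have "\<dots> = 1/2 * (\<Sum>k\<in>UNIV. y $ k * dX k (sq K) (x, y))" by (simp add: sum_yEE[OF xy])
  finally show ?thesis .
qed

lemma dY_local: "open A \<Longrightarrow> p \<in> A \<Longrightarrow> (\<And>q. q \<in> A \<Longrightarrow> f q = g q) \<Longrightarrow> dY j f p = dY j g p"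
  unfolding dY_D by (rule D_local)
lemma dX_local: "open A \<Longrightarrow> p \<in> A \<Longrightarrow> (\<And>q. q \<in> A \<Longrightarrow> f q = g q) \<Longrightarrow> dX j f p = dX j g p"
  unfolding dX_D by (rule D_local)

lemma dY_sum: "finite S \<Longrightarrow> (\<And>i. i \<in> S \<Longrightarrow> f i differentiable (at p)) \<Longrightarrow>
   dY j (\<lambda>q. \<Sum>i\<in>S. f i q) p = (\<Sum>i\<in>S. dY j (f i) p)"
  unfolding dY_D by (rule D_sum)
lemma dY_mult: "f differentiable (at p) \<Longrightarrow> g differentiable (at p) \<Longrightarrow>
   dY j (\<lambda>q. f q * g q) p = dY j f p * g p + f p * dY j g p"
  unfolding dY_D by (rule D_mult)
lemma dY_cmult: "f differentiable (at p) \<Longrightarrow> dY j (\<lambda>q. c * f q) p = c * dY j f p"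
  unfolding dY_D by (rule D_cmult)

lemma spray_delta: "p \<in> A \<Longrightarrow> (\<Sum>i\<in>UNIV. dY j (spray K i) p * dY i (sq K) p) = dX j (sq K) p"
proof -
  assume p: "p \<in> A"
  obtain x y where pxy: "p = (x, y)" by (cases p)
  have dG: "spray K i differentiable (at p)" for i using dfb[OF sm_G p] .
  have dL1: "dY i (sq K) differentiable (at p)" for i using dfb[OF smooth_dY[OF smL] p] .
  have dXL: "dX k (sq K) differentiable (at p)" for k using dfb[OF smooth_dX[OF smL] p] .
  have "dY j (\<lambda>q. \<Sum>i\<in>UNIV. spray K i q * dY i (sq K) q) p
      = dY j (\<lambda>q. 1/2 * (\<Sum>k\<in>UNIV. snd q $ k * dX k (sq K) q)) p"
  proof (rule dY_local[OF opn p])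
    fix q assume "q \<in> A" then show "(\<Sum>i\<in>UNIV. spray K i q * dY i (sq K) q) = 1/2 * (\<Sum>k\<in>UNIV. snd q $ k * dX k (sq K) q)"
      using star[of "fst q" "snd q"] by simp
  qed
  moreover have "dY j (\<lambda>q. \<Sum>i\<in>UNIV. spray K i q * dY i (sq K) q) p
      = (\<Sum>i\<in>UNIV. dY j (spray K i) p * dY i (sq K) p + spray K i p * dY j (dY i (sq K)) p)"
    by (simp add: dY_sum dY_mult dG dL1 differentiable_mult)
  moreover have "dY j (\<lambda>q. 1/2 * (\<Sum>k\<in>UNIV. snd q $ k * dX k (sq K) q)) p
      = 1/2 * (\<Sum>k\<in>UNIV. dY j (\<lambda>q. snd q $ k) p * dX k (sq K) p + snd p $ k * dY j (dX k (sq K)) p)"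
  proof -
    have ds: "(\<lambda>q. \<Sum>k\<in>UNIV. snd q $ k * dX k (sq K) q) differentiable (at p)"
      by (rule differentiable_sum) (auto intro!: differentiable_mult diff_snd dXL)
    have "dY j (\<lambda>q. 1/2 * (\<Sum>k\<in>UNIV. snd q $ k * dX k (sq K) q)) p
        = 1/2 * dY j (\<lambda>q. \<Sum>k\<in>UNIV. snd q $ k * dX k (sq K) q) p"
      by (rule dY_cmult[OF ds])
    also have "dY j (\<lambda>q. \<Sum>k\<in>UNIV. snd q $ k * dX k (sq K) q) p
        = (\<Sum>k\<in>UNIV. dY j (\<lambda>q. snd q $ k) p * dX k (sq K) p + snd p $ k * dY j (dX k (sq K)) p)"
      by (simp add: dY_sum dY_mult diff_snd dXL differentiable_mult)
    finally show ?thesis .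
  qed
  moreover have "(\<Sum>k\<in>UNIV. dY j (\<lambda>q. snd q $ k) p * dX k (sq K) p) = dX j (sq K) p"
    using exhaust_2[of j] by (auto simp add: dY_snd sum_2)
  moreover have "(\<Sum>i\<in>UNIV. spray K i p * dY j (dY i (sq K)) p) = EE j p / 2"
    using gG[OF p, of j] by (simp add: dYY_g sum_distrib_left mult_ac)
  moreover have "(\<Sum>k\<in>UNIV. snd p $ k * dY j (dX k (sq K)) p) = EE j p + dX j (sq K) p"
    using schwarz_XY[OF opn p smL] by (simp add: EE_def)
  ultimately show ?thesis by (simp add: sum.distrib algebra_simps)
qed

end


lemma h2_eq:
  assumes A: "open A" "conic A" and s: "smooth_on A f1" "smooth_on A f2" and h: "hom A 2 f1" "hom A 2 f2"
    and eq: "\<And>p j k. p \<in> A \<Longrightarrow> dY k (dY j f1) p = dY k (dY j f2) p"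
    and p: "p \<in> A"
  shows "f1 p = f2 p"
proof -
  define f where "f = (\<lambda>q. f1 q - f2 q)"
  have sf: "smooth_on A f" unfolding f_def by (intro smooth_diff A s)
  have hf: "hom A 2 f" unfolding f_def by (intro hom_diff h)
  have d1: "dY j f q = dY j f1 q - dY j f2 q" if "q \<in> A" for j q
    unfolding f_def dY_D by (rule D_diff) (use smooth_diffble s that in auto)
  have d2: "dY k (dY j f) q = 0" if q: "q \<in> A" for j k q
  proof -
    have "dY k (dY j f) q = dY k (\<lambda>q. dY j f1 q - dY j f2 q) q"
      unfolding dY_D by (rule D_local[OF A(1) q]) (simp add: d1[unfolded dY_D])
    also have "\<dots> = dY k (dY j f1) q - dY k (dY j f2) q"
      unfolding dY_D by (rule D_diff; rule smooth_diffble[OF smooth_D[OF s(1)] q] smooth_diffble[OF smooth_D[OF s(2)] q])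
    finally show ?thesis using eq[OF q] by simp
  qed
  obtain x y where pxy: "p = (x, y)" by (cases p)
  have hj: "hom A (2 - 1) (dY j f)" for j using hom_dY[OF A hf] smooth_diffble[OF sf] by blast
  have "(\<Sum>k\<in>UNIV. y $ k * dY k (dY j f) (x, y)) = (2 - 1) * dY j f (x, y)" for j
    by (rule euler[OF A hj]) (use smooth_diffble[OF smooth_dY[OF sf]] p pxy in auto)
  then have z1: "dY j f (x, y) = 0" for j using d2 p pxy by simp
  have "(\<Sum>j\<in>UNIV. y $ j * dY j f (x, y)) = 2 * f (x, y)"
    by (rule euler[OF A hf]) (use smooth_diffble[OF sf] p pxy in auto)
  then have "f p = 0" using z1 pxy by simp
  then show ?thesis by (simp add: f_def)
qed


lemma dY_const[simp]: "dY j (\<lambda>q. c) p = 0" by (simp add: dY_D)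
lemma dX_const[simp]: "dX j (\<lambda>q. c) p = 0" by (simp add: dX_D)

lemma dY_sq: "f differentiable (at p) \<Longrightarrow> dY j (\<lambda>q. (f q)^2) p = 2 * f p * dY j f p"
  using D_mult[of f p f] by (simp add: dY_D power2_eq_square)
lemma dX_sq: "f differentiable (at p) \<Longrightarrow> dX j (\<lambda>q. (f q)^2) p = 2 * f p * dX j f p"
  using D_mult[of f p f] by (simp add: dX_D power2_eq_square)
lemma dY_mult': "f differentiable (at p) \<Longrightarrow> g differentiable (at p) \<Longrightarrow>
   dY j (\<lambda>q. f q * g q) p = dY j f p * g p + f p * dY j g p"
  unfolding dY_D by (rule D_mult)
lemma dX_mult: "f differentiable (at p) \<Longrightarrow> g differentiable (at p) \<Longrightarrow>
   dX j (\<lambda>q. f q * g q) p = dX j f p * g p + f p * dX j g p"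
  unfolding dX_D by (rule D_mult)
lemma dY_exp: "f differentiable (at p) \<Longrightarrow> dY j (\<lambda>q. exp (f q)) p = exp (f p) * dY j f p"
  unfolding dY_D by (rule D_exp)
lemma dX_exp: "f differentiable (at p) \<Longrightarrow> dX j (\<lambda>q. exp (f q)) p = exp (f p) * dX j f p"
  unfolding dX_D by (rule D_exp)
lemma dY_add: "f differentiable (at p) \<Longrightarrow> g differentiable (at p) \<Longrightarrow>
   dY j (\<lambda>q. f q + g q) p = dY j f p + dY j g p"
  unfolding dY_D by (rule D_add)
lemma dY_diff: "f differentiable (at p) \<Longrightarrow> g differentiable (at p) \<Longrightarrow>
   dY j (\<lambda>q. f q - g q) p = dY j f p - dY j g p"
  unfolding dY_D by (rule D_diff)
lemma dY_cmult': "f differentiable (at p) \<Longrightarrow> dY j (\<lambda>q. c * f q) p = c * dY j f p"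
  unfolding dY_D by (rule D_cmult)
lemma dX_cmult: "f differentiable (at p) \<Longrightarrow> dX j (\<lambda>q. c * f q) p = c * dX j f p"
  unfolding dX_D by (rule D_cmult)
lemma dY_sum': "finite S \<Longrightarrow> (\<And>i. i \<in> S \<Longrightarrow> f i differentiable (at p)) \<Longrightarrow>
   dY j (\<lambda>q. \<Sum>i\<in>S. f i q) p = (\<Sum>i\<in>S. dY j (f i) p)"
  unfolding dY_D by (rule D_sum)

locale conf = fin A F for A F +
  fixes \<phi> :: "pt \<Rightarrow> real"
  assumes sm\<phi>: "smooth_on A \<phi>" and hom\<phi>: "hom A 0 \<phi>"
begin

definition E2 where "E2 = (\<lambda>q. exp (2 * \<phi> q))"

lemma sqFb: "sq (\<lambda>p. exp (\<phi> p) * F p) = (\<lambda>q. E2 q * (sq F) q)"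
  by (simp add: E2_def fun_eq_iff power_mult_distrib exp_double)

lemma smE2: "smooth_on A E2" unfolding E2_def
  by (intro smooth_exp smooth_mult opn smooth_const sm\<phi>)

lemma sdf: "smooth_on A f \<Longrightarrow> q \<in> A \<Longrightarrow> f differentiable (at q)" by (rule smooth_diffble)

lemma dE2: "q \<in> A \<Longrightarrow> dY j E2 q = 2 * E2 q * dY j \<phi> q"
  unfolding E2_def using dY_exp[of "\<lambda>q. 2 * \<phi> q" q j] dY_cmult'[of \<phi> q j 2] sdf[OF sm\<phi>]
  by (simp add: differentiable_mult)
lemma dXE2: "q \<in> A \<Longrightarrow> dX j E2 q = 2 * E2 q * dX j \<phi> q"
  unfolding E2_def using dX_exp[of "\<lambda>q. 2 * \<phi> q" q j] dX_cmult[of \<phi> q j 2] sdf[OF sm\<phi>]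
  by (simp add: differentiable_mult)

lemma dsqF: "q \<in> A \<Longrightarrow> dY j (sq F) q = 2 * F q * dY j F q"
  using dY_sq sdf[OF smK] by blast

lemma dYLb: "q \<in> A \<Longrightarrow> dY j (sq (\<lambda>p. exp (\<phi> p) * F p)) q = E2 q * (2 * dY j \<phi> q * (F q)^2 + dY j (sq F) q)"
  unfolding sqFb using dY_mult'[OF sdf[OF smE2] sdf[OF smL], of q j] dE2 by (simp add: algebra_simps)
lemma dXLb: "q \<in> A \<Longrightarrow> dX j (sq (\<lambda>p. exp (\<phi> p) * F p)) q = E2 q * (2 * dX j \<phi> q * (F q)^2 + dX j (sq F) q)"
  unfolding sqFb using dX_mult[OF sdf[OF smE2] sdf[OF smL], of q j] dXE2 by (simp add: algebra_simps)

lemma gF: "p \<in> A \<Longrightarrow> gmat F p $ i $ j = dY i F p * dY j F p + F p * dY i (dY j F) p"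
proof -
  assume p: "p \<in> A"
  have "dY i (dY j (sq F)) p = dY i (\<lambda>q. 2 * (F q * dY j F q)) p"
    by (rule dY_local[OF opn p]) (simp add: dsqF)
  also have "\<dots> = 2 * (dY i F p * dY j F p + F p * dY i (dY j F) p)"
    by (simp add: dY_cmult' dY_mult' differentiable_mult sdf[OF smK p] sdf[OF smooth_dY[OF smK] p])
  finally show ?thesis by (simp add: gmat_eq)
qed

lemma gFb: "p \<in> A \<Longrightarrow> gmat (\<lambda>p. exp (\<phi> p) * F p) p $ i $ j
   = E2 p * (gmat F p $ i $ j + 2 * F p * (dY i \<phi> p * dY j F p + dY i F p * dY j \<phi> p)
       + (F p)^2 * (2 * dY i \<phi> p * dY j \<phi> p + dY i (dY j \<phi>) p))"
proof -
  assume p: "p \<in> A"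
  have dd: "f differentiable (at p)" if "smooth_on A f" for f using sdf[OF that p] .
  have "dY i (dY j (sq (\<lambda>p. exp (\<phi> p) * F p))) p
      = dY i (\<lambda>q. E2 q * (2 * dY j \<phi> q * (F q)^2 + 2 * F q * dY j F q)) p"
    by (rule dY_local[OF opn p]) (simp add: dYLb dsqF)
  also have "\<dots> = dY i E2 p * (2 * dY j \<phi> p * (F p)^2 + 2 * F p * dY j F p)
     + E2 p * (2 * (dY i (dY j \<phi>) p * (F p)^2 + dY j \<phi> p * (2 * F p * dY i F p))
               + 2 * (dY i F p * dY j F p + F p * dY i (dY j F) p))"
    by (simp add: dY_mult' dY_cmult' dY_add dY_sq differentiable_mult dd smE2 smK sm\<phi> smooth_dY
          differentiable_power)
  finally have C: "dY i (dY j (sq (\<lambda>p. exp (\<phi> p) * F p))) p = \<dots>" .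
  have G: "gmat (\<lambda>p. exp (\<phi> p) * F p) p $ i $ j = dY i (dY j (sq (\<lambda>p. exp (\<phi> p) * F p))) p / 2"
    by (simp add: gmat_def)
  show ?thesis unfolding G C gF[OF p, of i j] dE2[OF p, of i]
    by (simp add: algebra_simps power2_eq_square)
qed

end


locale mainloc = conf A F \<phi> for A F \<phi> +
  fixes eps :: "pt \<Rightarrow> real" and m :: "pt \<Rightarrow> real^2"
  assumes fr: "\<And>p i j. p \<in> A \<Longrightarrow> gmat F p $ i $ j = dY i F p * dY j F p + eps p * m p $ i * m p $ j"
    and ep: "\<And>p. p \<in> A \<Longrightarrow> eps p = 1 \<or> eps p = -1"
    and an: "\<And>p. p \<in> A \<Longrightarrow> (F p)^2 * (\<Sum>i\<in>UNIV. \<Sum>j\<in>UNIV.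
        (dY i (dY j \<phi>) p + dY i \<phi> p * dY j \<phi> p) * m_up F m p $ i * m_up F m p $ j) + eps p \<noteq> 0"
begin

lemma H6: "p \<in> A \<Longrightarrow> (\<Sum>j\<in>UNIV. gmat F p $ i $ j * snd p $ j) = F p * dY i F p"
proof -
  assume p: "p \<in> A"
  obtain x y where pxy: "p = (x, y)" by (cases p)
  have "dY i (sq F) (x, y) = 2 * (\<Sum>l\<in>UNIV. y $ l * gmat F (x, y) $ l $ i)"
    using dYL_g p pxy by blast
  moreover have "dY i (sq F) (x, y) = 2 * F (x, y) * dY i F (x, y)" using dsqF p pxy by blast
  ultimately show ?thesis using gsym p pxy by (simp add: mult.commute)
qed

lemma frm_at: "p \<in> A \<Longrightarrow> frm (snd p) (\<chi> i. dY i F p) (m p) (gmat F p) (ginv F p) (F p) (eps p)"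
proof -
  assume p: "p \<in> A"
  obtain x y where pxy: "p = (x, y)" by (cases p)
  show ?thesis
  proof
    show "\<And>i j. gmat F p $ i $ j = (\<chi> i. dY i F p) $ i * (\<chi> i. dY i F p) $ j + eps p * m p $ i * m p $ j"
      using fr[OF p] by simp
    show "eps p = 1 \<or> eps p = -1" using ep[OF p] .
    show "gmat F p ** ginv F p = mat 1" using g_ginv[OF p] .
    show "F p \<noteq> 0" using nzK[OF p] .
    have "(\<Sum>j\<in>UNIV. y $ j * dY j F (x, y)) = 1 * F (x, y)"
      by (rule euler_sm[OF homK smK]) (use p pxy in simp)
    then show "dt (snd p) (\<chi> i. dY i F p) = F p" using pxy by (simp add: dt_def)
    show "\<And>i. (\<Sum>j\<in>UNIV. gmat F p $ i $ j * snd p $ j) = F p * (\<chi> i. dY i F p) $ i"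
      using H6[OF p] by simp
  qed
qed

lemma ndgFb: "p \<in> A \<Longrightarrow> det (gmat (\<lambda>p. exp (\<phi> p) * F p) p) \<noteq> 0"
proof -
  assume p: "p \<in> A"
  obtain x y where pxy: "p = (x, y)" by (cases p)
  interpret f: frm "snd p" "\<chi> i. dY i F p" "m p" "gmat F p" "ginv F p" "F p" "eps p" using frm_at[OF p] .
  show ?thesis
  proof (rule f.nondeg[where ph = "\<chi> i. dY i \<phi> p" and Ph = "\<chi> i j. dY i (dY j \<phi>) p" and P = "E2 p"])
    show "E2 p \<noteq> 0" by (simp add: E2_def)
    have "(\<Sum>j\<in>UNIV. y $ j * dY j \<phi> (x, y)) = 0 * \<phi> (x, y)"
      by (rule euler_sm[OF hom\<phi> sm\<phi>]) (use p pxy in simp)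
    then show "dt (snd p) (\<chi> i. dY i \<phi> p) = 0" using pxy by (simp add: dt_def)
    show "\<And>i j. (\<chi> i j. dY i (dY j \<phi>) p) $ i $ j = (\<chi> i j. dY i (dY j \<phi>) p) $ j $ i"
      using schwarz_YY[OF opn p sm\<phi>] by simp
    show "\<And>i. (\<Sum>j\<in>UNIV. (\<chi> i j. dY i (dY j \<phi>) p) $ i $ j * snd p $ j) = - (\<chi> i. dY i \<phi> p) $ i"
    proof -
      fix i
      have h: "hom A (0 - 1) (dY i \<phi>)" by (rule hom_dY_sm[OF hom\<phi> sm\<phi>])
      have "(\<Sum>j\<in>UNIV. y $ j * dY j (dY i \<phi>) (x, y)) = (0 - 1) * dY i \<phi> (x, y)"
        by (rule euler_sm[OF h smooth_dY[OF sm\<phi>]]) (use p pxy in simp)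
      then show "(\<Sum>j\<in>UNIV. (\<chi> i j. dY i (dY j \<phi>) p) $ i $ j * snd p $ j) = - (\<chi> i. dY i \<phi> p) $ i"
        using schwarz_YY[OF opn p sm\<phi>] pxy by (simp add: mult.commute)
    qed
    show "\<And>i j. gmat (\<lambda>p. exp (\<phi> p) * F p) p $ i $ j = E2 p * (gmat F p $ i $ j +
           2 * F p * ((\<chi> i. dY i \<phi> p) $ i * (\<chi> i. dY i F p) $ j + (\<chi> i. dY i F p) $ i * (\<chi> i. dY i \<phi> p) $ j) +
           (F p)^2 * (2 * (\<chi> i. dY i \<phi> p) $ i * (\<chi> i. dY i \<phi> p) $ j + (\<chi> i j. dY i (dY j \<phi>) p) $ i $ j))"
      using gFb[OF p] by simp
    show "(F p)^2 * (\<Sum>i\<in>UNIV. \<Sum>j\<in>UNIV. ((\<chi> i j. dY i (dY j \<phi>) p) $ i $ j + (\<chi> i. dY i \<phi> p) $ i * (\<chi> i. dY i \<phi> p) $ j) *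
           f.mu $ i * f.mu $ j) + eps p \<noteq> 0"
      using an[OF p] by (simp add: f.mu_def m_up_def)
  qed
qed

lemma smFb: "smooth_on A (\<lambda>p. exp (\<phi> p) * F p)"
  by (intro smooth_mult smooth_exp opn sm\<phi> smK)

lemma finFb: "fin A (\<lambda>p. exp (\<phi> p) * F p)"
proof
  show "open A" by (rule opn)
  show "conic A" by (rule cone)
  show "smooth_on A (\<lambda>p. exp (\<phi> p) * F p)" by (rule smFb)
  show "hom A 1 (\<lambda>p. exp (\<phi> p) * F p)" using hom_mult'[OF hom_exp[OF hom\<phi>] homK] by simp
  show "\<And>p. p \<in> A \<Longrightarrow> exp (\<phi> p) * F p \<noteq> 0" using nzK by simp
  show "\<And>p. p \<in> A \<Longrightarrow> det (gmat (\<lambda>p. exp (\<phi> p) * F p) p) \<noteq> 0" by (rule ndgFb)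
qed


lemma comma_iff: "p \<in> A \<Longrightarrow> (comma1 F \<phi> p = 0 \<and> comma2 F eps m \<phi> p = 0) \<longleftrightarrow> (\<forall>j. delta F j \<phi> p = 0)"
proof -
  assume p: "p \<in> A"
  interpret f: frm "snd p" "\<chi> i. dY i F p" "m p" "gmat F p" "ginv F p" "F p" "eps p" using frm_at[OF p] .
  define w where "w = (\<chi> j. delta F j \<phi> p)"
  have c1: "comma1 F \<phi> p = dt f.lu w"
    by (simp add: comma1_def f.lu_def ell_up_def dt_def w_def)
  have c2: "comma2 F eps m \<phi> p = eps p * dt f.mu w"
    by (simp add: comma2_def f.mu_def m_up_def dt_def w_def)
  have e0: "eps p \<noteq> 0" using ep[OF p] by auto
  show ?thesis
  proof
    assume "comma1 F \<phi> p = 0 \<and> comma2 F eps m \<phi> p = 0"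
    then have "dt f.lu w = 0" "dt f.mu w = 0" using c1 c2 e0 by auto
    then have "w = 0" by (rule f.basis)
    then show "\<forall>j. delta F j \<phi> p = 0" by (simp add: w_def vec_eq_iff)
  next
    assume "\<forall>j. delta F j \<phi> p = 0"
    then have "w = 0" by (simp add: w_def vec_eq_iff)
    then show "comma1 F \<phi> p = 0 \<and> comma2 F eps m \<phi> p = 0" using c1 c2 by (simp add: dt_def)
  qed
qed

lemma key: "q \<in> A \<Longrightarrow>
  (\<Sum>s\<in>UNIV. dY k (spray F s) q * dY s (sq (\<lambda>p. exp (\<phi> p) * F p)) q) - dX k (sq (\<lambda>p. exp (\<phi> p) * F p)) q
  = E2 q * 2 * (F q)^2 * ((\<Sum>s\<in>UNIV. dY k (spray F s) q * dY s \<phi> q) - dX k \<phi> q)"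
proof -
  assume q: "q \<in> A"
  have sd: "(\<Sum>s\<in>UNIV. dY k (spray F s) q * dY s (sq F) q) = dX k (sq F) q" using spray_delta[OF q] .
  have "(\<Sum>s\<in>UNIV. dY k (spray F s) q * dY s (sq (\<lambda>p. exp (\<phi> p) * F p)) q)
     = E2 q * (2 * (F q)^2 * (\<Sum>s\<in>UNIV. dY k (spray F s) q * dY s \<phi> q) + (\<Sum>s\<in>UNIV. dY k (spray F s) q * dY s (sq F) q))"
    by (simp only: dYLb[OF q]) (simp add: sum_2 algebra_simps)
  then show ?thesis by (simp only: sd dXLb[OF q]) (simp add: algebra_simps)
qed

lemma dir1:
  assumes B: "\<forall>p\<in>A. \<forall>i j k. berwald_conn (\<lambda>q. exp (\<phi> q) * F q) i j k p = berwald_conn F i j k p"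
    and p: "p \<in> A"
  shows "delta F j \<phi> p = 0"
proof -
  interpret b: fin A "\<lambda>q. exp (\<phi> q) * F q" by (rule finFb)
  have seq: "spray (\<lambda>q. exp (\<phi> q) * F q) i q = spray F i q" if q: "q \<in> A" for i q
    by (rule h2_eq[OF opn cone b.sm_G sm_G b.hom_G hom_G _ q]) (use B in \<open>simp add: berwald_conn_def\<close>)
  have "dY j (spray (\<lambda>q. exp (\<phi> q) * F q) i) p = dY j (spray F i) p" for i
    by (rule dY_local[OF opn p]) (rule seq)
  then have "(\<Sum>i\<in>UNIV. dY j (spray F i) p * dY i (sq (\<lambda>q. exp (\<phi> q) * F q)) p) = dX j (sq (\<lambda>q. exp (\<phi> q) * F q)) p"
    using b.spray_delta[OF p, of j] by simp
  then have "E2 p * 2 * (F p)^2 * ((\<Sum>s\<in>UNIV. dY j (spray F s) p * dY s \<phi> p) - dX j \<phi> p) = 0"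
    using key[OF p, of j] by simp
  moreover have "E2 p * 2 * (F p)^2 \<noteq> 0" using nzK[OF p] by (simp add: E2_def)
  ultimately have "(\<Sum>s\<in>UNIV. dY j (spray F s) p * dY s \<phi> p) - dX j \<phi> p = 0" by simp
  then show ?thesis by (simp add: delta_def nonlin_conn_def)
qed


lemma dir2:
  assumes D0: "\<And>q j. q \<in> A \<Longrightarrow> delta F j \<phi> q = 0" and p: "p \<in> A"
  shows "spray (\<lambda>q. exp (\<phi> q) * F q) i p = spray F i p"
proof -
  interpret b: fin A "\<lambda>q. exp (\<phi> q) * F q" by (rule finFb)
  obtain x y where pxy: "p = (x, y)" by (cases p)
  have yp: "snd p = y" using pxy by simp
  have i0: "dX k (sq (\<lambda>q. exp (\<phi> q) * F q)) q - (\<Sum>s\<in>UNIV. dY k (spray F s) q * dY s (sq (\<lambda>q. exp (\<phi> q) * F q)) q) = 0"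
    if q: "q \<in> A" for q k
  proof -
    have "(\<Sum>s\<in>UNIV. dY k (spray F s) q * dY s \<phi> q) - dX k \<phi> q = 0"
      using D0[OF q, of k] by (simp add: delta_def nonlin_conn_def)
    then show ?thesis using key[OF q, of k] by simp
  qed
  have dd: "f differentiable (at p)" if "smooth_on A f" for f using smooth_diffble[OF that p] .
  have Z: "dY l (dX k (sq (\<lambda>q. exp (\<phi> q) * F q))) p
      = (\<Sum>s\<in>UNIV. dY l (dY k (spray F s)) p * dY s (sq (\<lambda>q. exp (\<phi> q) * F q)) p
             + dY k (spray F s) p * dY l (dY s (sq (\<lambda>q. exp (\<phi> q) * F q))) p)" for l k
  proof -
    have "dY l (\<lambda>q. dX k (sq (\<lambda>q. exp (\<phi> q) * F q)) q - (\<Sum>s\<in>UNIV. dY k (spray F s) q * dY s (sq (\<lambda>q. exp (\<phi> q) * F q)) q)) p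
        = dY l (\<lambda>q. 0) p"
      by (rule dY_local[OF opn p]) (rule i0)
    moreover have "dY l (\<lambda>q. dX k (sq (\<lambda>q. exp (\<phi> q) * F q)) q - (\<Sum>s\<in>UNIV. dY k (spray F s) q * dY s (sq (\<lambda>q. exp (\<phi> q) * F q)) q)) p
        = dY l (dX k (sq (\<lambda>q. exp (\<phi> q) * F q))) p
          - (\<Sum>s\<in>UNIV. dY l (dY k (spray F s)) p * dY s (sq (\<lambda>q. exp (\<phi> q) * F q)) p
             + dY k (spray F s) p * dY l (dY s (sq (\<lambda>q. exp (\<phi> q) * F q))) p)"
    proof -
      have d1: "dX k (sq (\<lambda>q. exp (\<phi> q) * F q)) differentiable (at p)" by (rule dd[OF smooth_dX[OF b.smL]])
      have d2: "dY k (spray F s) differentiable (at p)" for s by (rule dd[OF smooth_dY[OF sm_G]])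
      have d3: "dY s (sq (\<lambda>q. exp (\<phi> q) * F q)) differentiable (at p)" for s by (rule dd[OF smooth_dY[OF b.smL]])
      have d4: "(\<lambda>q. \<Sum>s\<in>UNIV. dY k (spray F s) q * dY s (sq (\<lambda>q. exp (\<phi> q) * F q)) q) differentiable (at p)"
        by (rule differentiable_sum) (auto intro!: differentiable_mult d2 d3)
      show ?thesis
        by (simp only: dY_diff[OF d1 d4] dY_sum'[OF finite_class.finite_UNIV differentiable_mult[OF d2 d3]] dY_mult'[OF d2 d3])
    qed
    ultimately show ?thesis by simp
  qed
  have S: "dY l (dX k (sq (\<lambda>q. exp (\<phi> q) * F q))) p = dX k (dY l (sq (\<lambda>q. exp (\<phi> q) * F q))) p" for l k
    using schwarz_XY[OF opn p b.smL] by simp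
  have E1: "(\<Sum>k\<in>UNIV. y $ k * dY l (dY k (spray F s)) p) = dY l (spray F s) p" for l s
  proof -
    have h: "hom A (2 - 1) (dY l (spray F s))" by (rule hom_dY_sm[OF hom_G sm_G])
    have "(\<Sum>k\<in>UNIV. y $ k * dY k (dY l (spray F s)) (x, y)) = (2 - 1) * dY l (spray F s) (x, y)"
      by (rule euler_sm[OF h smooth_dY[OF sm_G]]) (use p pxy in simp)
    then show ?thesis using schwarz_YY[OF opn p sm_G] pxy by simp
  qed
  have E2': "(\<Sum>k\<in>UNIV. y $ k * dY k (spray F s) p) = 2 * spray F s p" for s
    using euler_sm[OF hom_G sm_G, of x y] p pxy by simp
  have EEb: "b.EE l p = 4 * (\<Sum>s\<in>UNIV. gmat (\<lambda>q. exp (\<phi> q) * F q) p $ l $ s * spray F s p)" for l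
  proof -
    let ?Lb = "sq (\<lambda>q. exp (\<phi> q) * F q)"
    have "(\<Sum>k\<in>UNIV. y $ k * dX k (dY l ?Lb) p)
        = (\<Sum>k\<in>UNIV. y $ k * (\<Sum>s\<in>UNIV. dY l (dY k (spray F s)) p * dY s ?Lb p
             + dY k (spray F s) p * dY l (dY s ?Lb) p))"
      by (simp add: S[symmetric] Z)
    also have "\<dots> = (\<Sum>s\<in>UNIV. (\<Sum>k\<in>UNIV. y $ k * dY l (dY k (spray F s)) p) * dY s ?Lb p)
        + (\<Sum>s\<in>UNIV. (\<Sum>k\<in>UNIV. y $ k * dY k (spray F s) p) * dY l (dY s ?Lb) p)"
      by (simp add: sum_2 algebra_simps)
    also have "\<dots> = (\<Sum>s\<in>UNIV. dY l (spray F s) p * dY s ?Lb p)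
        + 4 * (\<Sum>s\<in>UNIV. gmat (\<lambda>q. exp (\<phi> q) * F q) p $ l $ s * spray F s p)"
      by (simp only: E1 E2' b.dYY_g) (simp add: sum_2 algebra_simps)
    finally have "(\<Sum>k\<in>UNIV. y $ k * dX k (dY l ?Lb) p) = \<dots>" .
    moreover have "dX l ?Lb p = (\<Sum>s\<in>UNIV. dY l (spray F s) p * dY s ?Lb p)" using i0[OF p, of l] by simp
    ultimately show ?thesis by (simp add: b.EE_def yp)
  qed
  have "spray (\<lambda>q. exp (\<phi> q) * F q) i p
      = (\<Sum>l\<in>UNIV. ginv (\<lambda>q. exp (\<phi> q) * F q) p $ i $ l * (\<Sum>s\<in>UNIV. gmat (\<lambda>q. exp (\<phi> q) * F q) p $ l $ s * spray F s p))"
    by (simp add: b.spray_EE EEb sum_distrib_left)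
  also have "\<dots> = (\<Sum>s\<in>UNIV. (ginv (\<lambda>q. exp (\<phi> q) * F q) p ** gmat (\<lambda>q. exp (\<phi> q) * F q) p) $ i $ s * spray F s p)"
    by (simp add: matrix_matrix_mult_def sum_2 algebra_simps)
  also have "\<dots> = spray F i p"
    using b.ginv_g[OF p] exhaust_2[of i] by (auto simp: sum_2 mat_def)
  finally show ?thesis .
qed

end


theorem proposition3p10:
  fixes A :: "pt set" and F phi eps :: "pt \<Rightarrow> real" and m :: "pt \<Rightarrow> real^2"
  assumes "pseudo_finsler A F"
    and "pseudo_riemannian A F"
    and "berwald_frame A F eps m"
    and "aniso_conformal A F eps m phi"
    and "is_berwald A (\<lambda>p. exp (phi p) * F p)"
  shows "(\<forall>p\<in>A. \<forall>i j k. berwald_conn (\<lambda>q. exp (phi q) * F q) i j k p = berwald_conn F i j k p)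
     \<longleftrightarrow> (\<forall>p\<in>A. comma1 F phi p = 0 \<and> comma2 F eps m phi p = 0)"
proof -
  have pf: "open A" "conic A" "smooth_on A F" "hom A 1 F" "\<And>p. p \<in> A \<Longrightarrow> F p \<noteq> 0"
      "\<And>p. p \<in> A \<Longrightarrow> det (gmat F p) \<noteq> 0"
    using assms(1) unfolding pseudo_finsler_def conic_subbundle_def conic_def
    by (auto dest: hom_homog_on)
  have ac: "smooth_on A phi" "hom A 0 phi"
    "\<And>p. p \<in> A \<Longrightarrow> (F p)^2 * (\<Sum>i\<in>UNIV. \<Sum>j\<in>UNIV.
        (dY i (dY j phi) p + dY i phi p * dY j phi p) * m_up F m p $ i * m_up F m p $ j) + eps p \<noteq> 0"
    using assms(4) unfolding aniso_conformal_def by (auto dest: hom_homog_on)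
  have bf: "\<And>p i j. p \<in> A \<Longrightarrow> gmat F p $ i $ j = dY i F p * dY j F p + eps p * m p $ i * m p $ j"
    "\<And>p. p \<in> A \<Longrightarrow> eps p = 1 \<or> eps p = -1"
    using assms(3) unfolding berwald_frame_def by auto
  interpret ml: mainloc A F phi eps m
    by (unfold_locales; (rule pf ac bf)?; assumption)
  show ?thesis
  proof
    assume B: "\<forall>p\<in>A. \<forall>i j k. berwald_conn (\<lambda>q. exp (phi q) * F q) i j k p = berwald_conn F i j k p"
    show "\<forall>p\<in>A. comma1 F phi p = 0 \<and> comma2 F eps m phi p = 0"
      using ml.dir1[OF B] ml.comma_iff by blast
  next
    assume C: "\<forall>p\<in>A. comma1 F phi p = 0 \<and> comma2 F eps m phi p = 0"
    have D0: "\<And>q j. q \<in> A \<Longrightarrow> delta F j phi q = 0" using C ml.comma_iff by blast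
    show "\<forall>p\<in>A. \<forall>i j k. berwald_conn (\<lambda>q. exp (phi q) * F q) i j k p = berwald_conn F i j k p"
    proof (intro ballI allI)
      fix p i j k assume p: "p \<in> A"
      have "dY j (spray (\<lambda>q. exp (phi q) * F q) i) q = dY j (spray F i) q" if q: "q \<in> A" for q
        by (rule ml.dY_local[OF pf(1) q]) (rule ml.dir2[OF D0])
      then show "berwald_conn (\<lambda>q. exp (phi q) * F q) i j k p = berwald_conn F i j k p"
        unfolding berwald_conn_def by (rule ml.dY_local[OF pf(1) p])
    qed
  qed
qed


end
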